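(* Let $k$ be a field of characteristic $0$. Let $B=\prod_{i=1}^r k[s_i]/(s_i^{n_i})$ be graded by giving each $s_i$ some positive degree $d_i$, and let $A=k\oplus A_1\oplus A_2\oplus\cdots$ be a graded $k$-subalgebra of $B$ (a subalgebra spanned by homogeneous elements, with $A_0=k$ and $A_n$ its homogeneous elements of degree $n$). If $A$ is not a principal ideal algebra, then the induced map $\Omega_{A/k}\to\Omega_{B/k}$ is not injective.
   Context: A principal ideal algebra is a finite-dimensional commutative $k$-algebra in which every ideal is principal. *)

theory Defs
  imports "HOL-Computational_Algebra.Polynomial"
begin

text \<open>An element is a function
  b :: nat => 'k poly with b i the (reduced) polynomial in s_i for i < r and b i = 0 for i >= r.
  Reduction modulo s_i^(n i) is "mod monom 1 (n i)" (i.e. truncation).\<close>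

type_synonym 'k elt = "nat \<Rightarrow> 'k poly"

definition Bset :: "nat \<Rightarrow> (nat \<Rightarrow> nat) \<Rightarrow> ('k::field) elt set" where
  "Bset r n = {b. (\<forall>i<r. b i mod monom 1 (n i) = b i) \<and> (\<forall>i\<ge>r. b i = 0)}"

definition bzero :: "('k::field) elt" where "bzero = (\<lambda>i. 0)"

definition bone :: "nat \<Rightarrow> (nat \<Rightarrow> nat) \<Rightarrow> ('k::field) elt" where
  "bone r n = (\<lambda>i. if i < r then 1 mod monom 1 (n i) else 0)"

definition badd :: "('k::field) elt \<Rightarrow> 'k elt \<Rightarrow> 'k elt" where
  "badd b c = (\<lambda>i. b i + c i)"

definition bsub :: "('k::field) elt \<Rightarrow> 'k elt \<Rightarrow> 'k elt" where
  "bsub b c = (\<lambda>i. b i - c i)"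

definition bmul :: "(nat \<Rightarrow> nat) \<Rightarrow> ('k::field) elt \<Rightarrow> 'k elt \<Rightarrow> 'k elt" where
  "bmul n b c = (\<lambda>i. (b i * c i) mod monom 1 (n i))"

definition bscal :: "'k::field \<Rightarrow> 'k elt \<Rightarrow> 'k elt" where
  "bscal c b = (\<lambda>i. smult c (b i))"

definition homog :: "nat \<Rightarrow> (nat \<Rightarrow> nat) \<Rightarrow> (nat \<Rightarrow> nat) \<Rightarrow> nat \<Rightarrow> ('k::field) elt \<Rightarrow> bool" where
  "homog r n d m b \<longleftrightarrow> b \<in> Bset r n \<and> (\<forall>i<r. \<forall>j. coeff (b i) j \<noteq> 0 \<longrightarrow> j * d i = m)"

definition subalg :: "nat \<Rightarrow> (nat \<Rightarrow> nat) \<Rightarrow> ('k::field) elt set \<Rightarrow> bool" where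
  "subalg r n A \<longleftrightarrow> A \<subseteq> Bset r n \<and> bone r n \<in> A
     \<and> (\<forall>a\<in>A. \<forall>b\<in>A. badd a b \<in> A)
     \<and> (\<forall>a\<in>A. \<forall>b\<in>A. bmul n a b \<in> A)
     \<and> (\<forall>c. \<forall>a\<in>A. bscal c a \<in> A)"

definition graded_subalg :: "nat \<Rightarrow> (nat \<Rightarrow> nat) \<Rightarrow> (nat \<Rightarrow> nat) \<Rightarrow> ('k::field) elt set \<Rightarrow> bool" where
  "graded_subalg r n d A \<longleftrightarrow> subalg r n A
     \<and> (\<forall>a\<in>A. \<exists>hs. set hs \<subseteq> A \<and> (\<forall>h\<in>set hs. \<exists>m. homog r n d m h)
                   \<and> a = foldr badd hs bzero)
     \<and> {a\<in>A. homog r n d 0 a} = {bscal c (bone r n) | c. True}"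

definition is_ideal :: "(nat \<Rightarrow> nat) \<Rightarrow> ('k::field) elt set \<Rightarrow> 'k elt set \<Rightarrow> bool" where
  "is_ideal n A I \<longleftrightarrow> I \<subseteq> A \<and> bzero \<in> I \<and> (\<forall>x\<in>I. \<forall>y\<in>I. badd x y \<in> I)
     \<and> (\<forall>a\<in>A. \<forall>x\<in>I. bmul n a x \<in> I)"

definition principal_ideal_alg :: "(nat \<Rightarrow> nat) \<Rightarrow> ('k::field) elt set \<Rightarrow> bool" where
  "principal_ideal_alg n A \<longleftrightarrow>
     (\<forall>I. is_ideal n A I \<longrightarrow> (\<exists>x\<in>A. I = {bmul n a x | a. a \<in> A}))"

text \<open>The free S-module on symbols dc (c in S):
  f :: 'k elt => 'k elt, f c = coefficient of dc, finitely supported, coefficients in S,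
  supported on S.  Omega_{S/k} = free S / krel S.\<close>

definition free_mod :: "('k::field) elt set \<Rightarrow> ('k elt \<Rightarrow> 'k elt) set" where
  "free_mod S = {f. (\<forall>x. f x \<in> S) \<and> (\<forall>x. x \<notin> S \<longrightarrow> f x = bzero) \<and> finite {x. f x \<noteq> bzero}}"

definition gen :: "nat \<Rightarrow> (nat \<Rightarrow> nat) \<Rightarrow> ('k::field) elt \<Rightarrow> ('k elt \<Rightarrow> 'k elt)" where
  "gen r n c = (\<lambda>x. if x = c then bone r n else bzero)"

definition fadd :: "(('k::field) elt \<Rightarrow> 'k elt) \<Rightarrow> ('k elt \<Rightarrow> 'k elt) \<Rightarrow> ('k elt \<Rightarrow> 'k elt)" where
  "fadd f g = (\<lambda>x. badd (f x) (g x))"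

definition fsub :: "(('k::field) elt \<Rightarrow> 'k elt) \<Rightarrow> ('k elt \<Rightarrow> 'k elt) \<Rightarrow> ('k elt \<Rightarrow> 'k elt)" where
  "fsub f g = (\<lambda>x. bsub (f x) (g x))"

definition fsmul :: "(nat \<Rightarrow> nat) \<Rightarrow> ('k::field) elt \<Rightarrow> ('k elt \<Rightarrow> 'k elt) \<Rightarrow> ('k elt \<Rightarrow> 'k elt)" where
  "fsmul n s f = (\<lambda>x. bmul n s (f x))"

inductive_set krel :: "nat \<Rightarrow> (nat \<Rightarrow> nat) \<Rightarrow> ('k::field) elt set \<Rightarrow> ('k elt \<Rightarrow> 'k elt) set"
  for r n S where
  zero: "(\<lambda>x. bzero) \<in> krel r n S"
| add: "f \<in> krel r n S \<Longrightarrow> g \<in> krel r n S \<Longrightarrow> fadd f g \<in> krel r n S"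
| smul: "s \<in> S \<Longrightarrow> f \<in> krel r n S \<Longrightarrow> fsmul n s f \<in> krel r n S"
| additive: "a \<in> S \<Longrightarrow> c \<in> S \<Longrightarrow>
     fsub (gen r n (badd a c)) (fadd (gen r n a) (gen r n c)) \<in> krel r n S"
| leibniz: "a \<in> S \<Longrightarrow> c \<in> S \<Longrightarrow>
     fsub (gen r n (bmul n a c)) (fadd (fsmul n a (gen r n c)) (fsmul n c (gen r n a))) \<in> krel r n S"
| const: "gen r n (bscal l (bone r n)) \<in> krel r n S"

text \<open>The induced map Omega_{A/k} -> Omega_{B/k} (da |-> da) is not injective:
  some element of the free A-module is nonzero modulo the A-relations but zero
  modulo the B-relations.\<close>
definition omega_map_not_injective :: "nat \<Rightarrow> (nat \<Rightarrow> nat) \<Rightarrow> ('k::field) elt set \<Rightarrow> bool" where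
  "omega_map_not_injective r n A \<longleftrightarrow>
     (\<exists>f\<in>free_mod A. f \<notin> krel r n A \<and> f \<in> krel r n (Bset r n))"

end

theory Submission
  imports Defs "HOL-Library.Function_Algebras"
begin


lemma coeff_mod_monom:
  fixes P :: "'k::field poly"
  shows "coeff (P mod monom 1 N) j = (if j < N then coeff P j else 0)"
proof -
  let ?R = "P mod monom 1 N"
  have "monom 1 N dvd (P - ?R)"
    by (simp add: mod_eq_dvd_iff[symmetric])
  hence lo: "\<forall>k<N. coeff P k = coeff ?R k" unfolding monom_1_dvd_iff' by simp
  have hi: "coeff ?R j = 0" if "N \<le> j"
  proof (cases "?R = 0")
    case False
    have "degree ?R < degree (monom (1::'k) N)"
      using degree_mod_less[of "monom (1::'k) N" P] False by auto
    then show ?thesis using that by (intro coeff_eq_0) (simp add: degree_monom_eq)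
  qed simp
  show ?thesis using lo hi by (auto simp: not_less)
qed

lemma badd_eq: "badd a b = a + b" by (auto simp: badd_def fun_eq_iff)
lemma bsub_eq: "bsub a b = a - b" by (auto simp: bsub_def fun_eq_iff)
lemma bzero_eq: "bzero = 0" by (auto simp: bzero_def fun_eq_iff)
lemma fadd_eq: "fadd f g = f + g" by (auto simp: fadd_def badd_def fun_eq_iff)
lemma fsub_eq: "fsub f g = f - g" by (auto simp: fsub_def bsub_def fun_eq_iff)

lemma bmul_apply: "bmul n a b i = (a i * b i) mod monom 1 (n i)"
  by (simp add: bmul_def)
lemma bscal_apply: "bscal c a i = smult c (a i)"
  by (simp add: bscal_def)
lemma bone_apply: "bone r n i = (if i < r then 1 mod monom 1 (n i) else 0)"
  by (simp add: bone_def)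

lemma Bset_iff: "b \<in> Bset r n \<longleftrightarrow> (\<forall>i<r. b i mod monom 1 (n i) = b i) \<and> (\<forall>i\<ge>r. b i = 0)"
  by (simp add: Bset_def)

lemma mod_smult_left': "(smult c P) mod (Q::'k::field poly) = smult c (P mod Q)"
  by (rule mod_smult_left)

lemma bmul_comm: "bmul n a b = bmul n b a"
  by (simp add: bmul_def mult.commute)
lemma bmul_assoc: "bmul n (bmul n a b) c = bmul n a (bmul n b c)"
  by (simp add: bmul_def fun_eq_iff mod_simps mult.assoc)
lemma bmul_add_left: "bmul n (a + b) c = bmul n a c + bmul n b c"
  by (simp add: bmul_def fun_eq_iff algebra_simps mod_simps poly_mod_add_left)
lemma bmul_add_right: "bmul n c (a + b) = bmul n c a + bmul n c b"
  by (simp add: bmul_def fun_eq_iff algebra_simps poly_mod_add_left)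
lemma bmul_diff_left: "bmul n (a - b) c = bmul n a c - bmul n b c"
  by (simp add: bmul_def fun_eq_iff algebra_simps poly_mod_diff_left)
lemma bmul_diff_right: "bmul n c (a - b) = bmul n c a - bmul n c b"
  by (simp add: bmul_def fun_eq_iff algebra_simps poly_mod_diff_left)
lemma bmul_minus_left: "bmul n (- a) c = - bmul n a c"
  by (simp add: bmul_def fun_eq_iff)
lemma bmul_minus_right: "bmul n c (- a) = - bmul n c a"
  by (simp add: bmul_def fun_eq_iff)
lemma bmul_zero_left[simp]: "bmul n 0 c = 0"
  by (simp add: bmul_def fun_eq_iff)
lemma bmul_zero_right[simp]: "bmul n c 0 = 0"
  by (simp add: bmul_def fun_eq_iff)
lemma bmul_bscal_left: "bmul n (bscal k a) c = bscal k (bmul n a c)"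
  by (simp add: bmul_def bscal_def fun_eq_iff mod_smult_left)
lemma bmul_bscal_right: "bmul n c (bscal k a) = bscal k (bmul n c a)"
  by (simp add: bmul_def bscal_def fun_eq_iff mod_smult_left)
lemma bscal_add: "bscal k (a + b) = bscal k a + bscal k b"
  by (simp add: bscal_def fun_eq_iff smult_add_right)
lemma bscal_diff: "bscal k (a - b) = bscal k a - bscal k b"
  by (simp add: bscal_def fun_eq_iff smult_diff_right)
lemma bscal_minus: "bscal k (- a) = - bscal k a"
  by (simp add: bscal_def fun_eq_iff)
lemma bscal_add_left: "bscal (k + l) a = bscal k a + bscal l a"
  by (simp add: bscal_def fun_eq_iff smult_add_left)
lemma bscal_zero[simp]: "bscal k 0 = 0" "bscal 0 a = 0"
  by (simp_all add: bscal_def fun_eq_iff)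
lemma bscal_one[simp]: "bscal 1 a = a"
  by (simp add: bscal_def fun_eq_iff)
lemma bscal_bscal: "bscal k (bscal l a) = bscal (k * l) a"
  by (simp add: bscal_def fun_eq_iff)
lemma bscal_neg1: "bscal (-1) a = - a"
  by (simp add: bscal_def fun_eq_iff)
lemma sum_fun_apply: "sum f S i = (\<Sum>x\<in>S. f x i)"
  by (induction S rule: infinite_finite_induct) auto
lemma smult_sum_right: "smult k (sum f S) = (\<Sum>x\<in>S. smult k (f x))"
  by (induction S rule: infinite_finite_induct) (simp_all add: smult_add_right)
lemma bscal_sum: "bscal k (sum f S) = (\<Sum>x\<in>S. bscal k (f x))"
  by (simp add: fun_eq_iff bscal_def sum_fun_apply smult_sum_right)
lemma bmul_sum_right: "bmul n c (sum f S) = (\<Sum>x\<in>S. bmul n c (f x))"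
proof (induction S rule: infinite_finite_induct)
  case (insert x F)
  then show ?case by (simp only: sum.insert[OF insert(1,2)] bmul_add_right insert(3))
qed (simp_all add: bmul_def fun_eq_iff)

lemma Bset_bmul: "bmul n a b \<in> Bset r n" if "a \<in> Bset r n" "b \<in> Bset r n"
  using that by (auto simp: Bset_iff bmul_def)
lemma Bset_add: "a + b \<in> Bset r n" if "a \<in> Bset r n" "b \<in> Bset r n"
  using that by (auto simp: Bset_iff poly_mod_add_left)
lemma Bset_diff: "a - b \<in> Bset r n" if "a \<in> Bset r n" "b \<in> Bset r n"
  using that by (auto simp: Bset_iff poly_mod_diff_left)
lemma Bset_minus: "- a \<in> Bset r n" if "a \<in> Bset r n"
  using that by (auto simp: Bset_iff)
lemma Bset_zero[simp]: "0 \<in> Bset r n"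
  by (auto simp: Bset_iff)
lemma Bset_bscal: "bscal k a \<in> Bset r n" if "a \<in> Bset r n"
  using that by (auto simp: Bset_iff bscal_def mod_smult_left)
lemma Bset_bone[simp]: "bone r n \<in> Bset r n"
  by (auto simp: Bset_iff bone_def)
lemma Bset_sum: "(\<And>x. x \<in> S \<Longrightarrow> f x \<in> Bset r n) \<Longrightarrow> sum f S \<in> Bset r n"
  by (induction S rule: infinite_finite_induct) (auto intro: Bset_add)

lemma bmul_bone_left: "a \<in> Bset r n \<Longrightarrow> bmul n (bone r n) a = a"
  by (auto simp: Bset_iff bmul_def bone_def fun_eq_iff mod_simps)
lemma bmul_bone_right: "a \<in> Bset r n \<Longrightarrow> bmul n a (bone r n) = a"
  by (subst bmul_comm) (rule bmul_bone_left)
lemma bscal_as_bmul: "a \<in> Bset r n \<Longrightarrow> bscal k a = bmul n (bscal k (bone r n)) a"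
  by (simp add: bmul_bscal_left bmul_bone_left)


definition hi :: "nat \<Rightarrow> (nat \<Rightarrow> nat) \<Rightarrow> nat \<Rightarrow> ('k::field) elt \<Rightarrow> bool" where
  "hi r d m w \<longleftrightarrow> (\<forall>i<r. \<forall>j. coeff (w i) j \<noteq> 0 \<longrightarrow> m \<le> j * d i)"

definition bpow :: "nat \<Rightarrow> (nat \<Rightarrow> nat) \<Rightarrow> ('k::field) elt \<Rightarrow> nat \<Rightarrow> 'k elt" where
  "bpow r n z k = ((bmul n z) ^^ k) (bone r n)"

lemma bpow_0[simp]: "bpow r n z 0 = bone r n" by (simp add: bpow_def)
lemma bpow_Suc: "bpow r n z (Suc k) = bmul n z (bpow r n z k)" by (simp add: bpow_def)

definition geo :: "nat \<Rightarrow> (nat \<Rightarrow> nat) \<Rightarrow> ('k::field) elt \<Rightarrow> nat \<Rightarrow> 'k elt" where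
  "geo r n z k = ((\<lambda>g. bone r n + bmul n z g) ^^ k) 0"

lemma geo_0[simp]: "geo r n z 0 = 0" by (simp add: geo_def)
lemma geo_Suc: "geo r n z (Suc k) = bone r n + bmul n z (geo r n z k)" by (simp add: geo_def)

lemma coeff_bmul: "coeff (bmul n u v i) j = (if j < n i then coeff (u i * v i) j else 0)"
  by (simp add: bmul_def coeff_mod_monom)

lemma hi_bmul:
  assumes "hi r d a u" "hi r d b v"
  shows "hi r d (a + b) (bmul n u v)"
  unfolding hi_def
proof (intro allI impI)
  fix i j assume i: "i < r" and nz: "coeff (bmul n u v i) j \<noteq> 0"
  hence "coeff (u i * v i) j \<noteq> 0" by (simp add: coeff_bmul split: if_splits)
  hence "(\<Sum>l\<le>j. coeff (u i) l * coeff (v i) (j - l)) \<noteq> 0" by (simp add: coeff_mult)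
  then obtain l where l: "l \<le> j" "coeff (u i) l * coeff (v i) (j - l) \<noteq> 0"
    by (metis (no_types, lifting) atMost_iff sum.not_neutral_contains_not_neutral)
  hence "a \<le> l * d i" "b \<le> (j - l) * d i" using assms i by (auto simp: hi_def)
  moreover have "l * d i + (j - l) * d i = j * d i" using l(1) by (simp add: add_mult_distrib[symmetric])
  ultimately show "a + b \<le> j * d i" by linarith
qed

lemma hi_0: "hi r d 0 w" by (simp add: hi_def)
lemma hi_mono: "hi r d m w \<Longrightarrow> m' \<le> m \<Longrightarrow> hi r d m' w" by (force simp: hi_def)
lemma hi_add: "hi r d m u \<Longrightarrow> hi r d m v \<Longrightarrow> hi r d m (u + v)"
  unfolding hi_def by (metis add.right_neutral coeff_add plus_fun_apply)
lemma hi_minus: "hi r d m u \<Longrightarrow> hi r d m (- u)"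
  by (auto simp: hi_def)
lemma hi_diff: "hi r d m u \<Longrightarrow> hi r d m v \<Longrightarrow> hi r d m (u - v)"
  using hi_add[of r d m u "- v"] hi_minus by fastforce
lemma hi_bscal: "hi r d m u \<Longrightarrow> hi r d m (bscal c u)"
  by (auto simp: hi_def bscal_def)
lemma hi_zero[simp]: "hi r d m 0" by (simp add: hi_def)
lemma hi_homog: "homog r n d m w \<Longrightarrow> hi r d m w"
  by (auto simp: hi_def homog_def)

lemma hi_bpow: "hi r d 1 z \<Longrightarrow> hi r d k (bpow r n z k)"
proof (induction k)
  case 0 then show ?case by (simp add: hi_0)
next
  case (Suc k)
  then show ?case using hi_bmul[of r d 1 z k "bpow r n z k" n] by (simp add: bpow_Suc)
qed

lemma Bset_bpow: "z \<in> Bset r n \<Longrightarrow> bpow r n z k \<in> Bset r n"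
  by (induction k) (auto simp: bpow_Suc intro: Bset_bmul)

lemma Bset_geo: "z \<in> Bset r n \<Longrightarrow> geo r n z k \<in> Bset r n"
  by (induction k) (auto simp: geo_Suc intro: Bset_bmul Bset_add)

lemma geo_mul: assumes "z \<in> Bset r n"
  shows "bmul n (geo r n z k) (bone r n - z) = bone r n - bpow r n z k"
proof (induction k)
  case 0 then show ?case by (simp add: fun_eq_iff bmul_def)
next
  case (Suc k)
  have "bmul n (geo r n z (Suc k)) (bone r n - z)
     = (bone r n - z) + bmul n z (bmul n (geo r n z k) (bone r n - z))"
    using assms by (simp add: geo_Suc bmul_add_left bmul_assoc bmul_bone_left Bset_diff)
  also have "\<dots> = (bone r n - z) + bmul n z (bone r n - bpow r n z k)"
    by (simp only: Suc.IH)
  also have "\<dots> = bone r n - bpow r n z (Suc k)"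
    using assms by (simp add: bmul_diff_right bmul_bone_right bpow_Suc)
  finally show ?case .
qed

lemma hi_big_zero:
  assumes "w \<in> Bset r n" "hi r d M w" "\<forall>i<r. n i * d i \<le> M" "\<forall>i<r. 0 < d i"
  shows "w = 0"
proof -
  have "w i = 0" for i
  proof (cases "i < r")
    case True
    have "coeff (w i) j = 0" for j
    proof (rule ccontr)
      assume nz: "coeff (w i) j \<noteq> 0"
      have "w i = w i mod monom 1 (n i)" using assms(1) True by (simp add: Bset_iff)
      hence "j < n i" using nz by (metis coeff_mod_monom)
      hence "j * d i < n i * d i" using assms(4) True by simp
      moreover have "M \<le> j * d i" using assms(2) True nz by (auto simp: hi_def)
      moreover have "n i * d i \<le> M" using assms(3) True by simp
      ultimately show False by linarith
    qed
    then show ?thesis by (intro poly_eqI) simp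
  next
    case False then show ?thesis using assms(1) unfolding Bset_iff by simp
  qed
  then show ?thesis by (intro ext) simp
qed


locale setting =
  fixes r :: nat and n d :: "nat \<Rightarrow> nat" and A :: "('k::field_char_0) elt set"
  assumes n_pos: "\<And>i. i < r \<Longrightarrow> 1 \<le> n i" and d_pos: "\<And>i. i < r \<Longrightarrow> 0 < d i"
  and graded: "graded_subalg r n d A"
begin

lemma subalg: "subalg r n A" using graded by (simp add: graded_subalg_def)
lemma A_Bset: "a \<in> A \<Longrightarrow> a \<in> Bset r n" using subalg by (auto simp: subalg_def)
lemma A_one: "bone r n \<in> A" using subalg by (auto simp: subalg_def)
lemma A_add: "a \<in> A \<Longrightarrow> b \<in> A \<Longrightarrow> a + b \<in> A" using subalg by (auto simp: subalg_def badd_eq)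
lemma A_mul: "a \<in> A \<Longrightarrow> b \<in> A \<Longrightarrow> bmul n a b \<in> A" using subalg by (auto simp: subalg_def)
lemma A_scal: "a \<in> A \<Longrightarrow> bscal c a \<in> A" using subalg by (auto simp: subalg_def)
lemma A_zero: "0 \<in> A" using A_scal[OF A_one, of 0] by simp
lemma A_minus: "a \<in> A \<Longrightarrow> - a \<in> A" using A_scal[of a "-1"] by (simp add: bscal_neg1)
lemma A_diff: "a \<in> A \<Longrightarrow> b \<in> A \<Longrightarrow> a - b \<in> A"
  using A_add[of a "- b"] A_minus[of b] by simp
lemma A_sum: "(\<And>x. x \<in> S \<Longrightarrow> f x \<in> A) \<Longrightarrow> sum f S \<in> A"
  by (induction S rule: infinite_finite_induct) (auto intro: A_add A_zero)
lemma A_bpow: "z \<in> A \<Longrightarrow> bpow r n z k \<in> A"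
  by (induction k) (auto simp: bpow_Suc intro: A_mul A_one)
lemma A_geo: "z \<in> A \<Longrightarrow> geo r n z k \<in> A"
  by (induction k) (auto simp: geo_Suc intro: A_mul A_one A_add A_zero)

definition bigM :: nat where "bigM = (\<Sum>i<r. n i * d i)"

lemma bigM_ge: "i < r \<Longrightarrow> n i * d i \<le> bigM"
  unfolding bigM_def by (rule member_le_sum) auto

lemma nilpotent: "z \<in> Bset r n \<Longrightarrow> hi r d 1 z \<Longrightarrow> bpow r n z bigM = 0"
  by (rule hi_big_zero[of _ _ _ d bigM]) (auto intro: Bset_bpow hi_bpow bigM_ge d_pos)

lemma inverse_exists:
  assumes "x \<in> A" "hi r d 1 x" "w \<in> A" "c \<noteq> 0"
  shows "\<exists>v\<in>A. bmul n v (bscal c (bone r n) + bmul n w x) = bone r n"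
proof -
  define z where "z = bscal (- 1 / c) (bmul n w x)"
  have zA: "z \<in> A" unfolding z_def by (intro A_scal A_mul assms)
  have zB: "z \<in> Bset r n" using zA A_Bset by blast
  have "hi r d (0 + 1) (bmul n w x)" by (rule hi_bmul[OF hi_0 assms(2)])
  hence zhi: "hi r d 1 z" unfolding z_def by (simp add: hi_bscal)
  have u: "bscal c (bone r n) + bmul n w x = bscal c (bone r n - z)"
    using assms(4) by (simp add: z_def bscal_diff bscal_bscal bscal_neg1)
  define v where "v = bscal (1 / c) (geo r n z bigM)"
  have "bmul n v (bscal c (bone r n) + bmul n w x)
      = bscal c (bscal (1/c) (bmul n (geo r n z bigM) (bone r n - z)))"
    unfolding u v_def by (simp only: bmul_bscal_left bmul_bscal_right)
  also have "\<dots> = bone r n"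
    using assms(4) by (simp add: bscal_bscal geo_mul[OF zB] nilpotent[OF zB zhi])
  finally show ?thesis using zA by (intro bexI[of _ v]) (auto simp: v_def intro: A_scal A_geo)
qed

definition mults :: "'k elt \<Rightarrow> 'k elt set" where "mults x = {bmul n a x | a. a \<in> A}"

lemma principal_if:
  assumes xA: "x \<in> A" and xhi: "hi r d 1 x"
    and dec: "\<forall>a\<in>A. \<exists>c w. w \<in> A \<and> a = bscal c (bone r n) + bmul n w x"
  shows "principal_ideal_alg n A"
  unfolding principal_ideal_alg_def
proof (intro allI impI)
  fix I assume I: "is_ideal n A I"
  have IA: "I \<subseteq> A" and I0: "0 \<in> I" and Imul: "\<And>a y. a \<in> A \<Longrightarrow> y \<in> I \<Longrightarrow> bmul n a y \<in> I"
    using I by (auto simp: is_ideal_def bzero_eq)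
  have xB: "x \<in> Bset r n" using xA A_Bset by blast
  define K where "K = {k. \<forall>a\<in>I. \<exists>u\<in>A. a = bmul n u (bpow r n x k)}"
  have K0: "0 \<in> K" unfolding K_def using IA A_Bset by (auto intro!: bexI simp: bmul_bone_right)
  show "\<exists>g\<in>A. I = {bmul n a g |a. a \<in> A}"
  proof (cases "bigM \<in> K")
    case True
    have "I = {0}"
      using True I0 by (auto simp: K_def nilpotent[OF xB xhi])
    then show ?thesis using A_zero by (intro bexI[of _ 0]) auto
  next
    case False
    have "\<exists>k. k \<in> K \<and> Suc k \<notin> K"
    proof (rule ccontr)
      assume "\<not> ?thesis"
      hence "k \<in> K" for k by (induction k) (use K0 in auto)
      with False show False by blast
    qed
    then obtain k where kK: "k \<in> K" and kK': "Suc k \<notin> K" by blast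
    from kK' obtain a where aI: "a \<in> I" and anot: "\<forall>u\<in>A. a \<noteq> bmul n u (bpow r n x (Suc k))"
      unfolding K_def by blast
    from kK aI obtain u where uA: "u \<in> A" and au: "a = bmul n u (bpow r n x k)"
      unfolding K_def by blast
    from dec uA obtain c w where wA: "w \<in> A" and uw: "u = bscal c (bone r n) + bmul n w x"
      by blast
    have c0: "c \<noteq> 0"
    proof
      assume "c = 0"
      hence "a = bmul n w (bpow r n x (Suc k))"
        by (simp add: au uw bmul_assoc bpow_Suc)
      with anot wA show False by blast
    qed
    obtain v where vA: "v \<in> A" and vu: "bmul n v u = bone r n"
      using inverse_exists[OF xA xhi wA c0] uw by blast
    have "bmul n v a = bpow r n x k"
      by (simp add: au bmul_assoc[symmetric] vu bmul_bone_left Bset_bpow xB)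
    hence xkI: "bpow r n x k \<in> I" using Imul[OF vA aI] by simp
    have "I = {bmul n b (bpow r n x k) |b. b \<in> A}"
    proof
      show "I \<subseteq> {bmul n b (bpow r n x k) |b. b \<in> A}" using kK unfolding K_def by blast
      show "{bmul n b (bpow r n x k) |b. b \<in> A} \<subseteq> I" using Imul xkI by blast
    qed
    then show ?thesis using A_bpow[OF xA] by blast
  qed
qed

end


definition hpi :: "(nat \<Rightarrow> nat) \<Rightarrow> nat \<Rightarrow> ('k::field) elt \<Rightarrow> 'k elt" where
  "hpi d m w = (\<lambda>i. if 0 < d i \<and> d i dvd m then monom (coeff (w i) (m div d i)) (m div d i) else 0)"

lemma coeff_pi:
  assumes "0 < d i"
  shows "coeff (hpi d m w i) j = (if j * d i = m then coeff (w i) j else 0)"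
proof (cases "d i dvd m")
  case True
  then obtain t where m: "m = d i * t" by blast
  have "(j * d i = m) = (j = t)" using assms m by (simp add: mult.commute)
  then show ?thesis using assms True m by (auto simp: hpi_def coeff_monom)
next
  case False
  hence "j * d i \<noteq> m" by (metis dvd_triv_right)
  then show ?thesis using False by (simp add: hpi_def)
qed

lemma pi_add: "hpi d m (u + v) = hpi d m u + hpi d m v"
  by (auto simp: hpi_def fun_eq_iff add_monom)
lemma pi_minus: "hpi d m (- u) = - hpi d m u"
  by (auto simp: hpi_def fun_eq_iff minus_monom)
lemma pi_diff: "hpi d m (u - v) = hpi d m u - hpi d m v"
  by (auto simp: hpi_def fun_eq_iff diff_monom)
lemma pi_scal: "hpi d m (bscal c u) = bscal c (hpi d m u)"
  by (auto simp: hpi_def fun_eq_iff bscal_def smult_monom)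
lemma pi_zero[simp]: "hpi d m 0 = 0"
  by (auto simp: hpi_def fun_eq_iff)

lemma homog_Bset: "homog r n d m h \<Longrightarrow> h \<in> Bset r n" by (simp add: homog_def)

lemma homog_bmul:
  assumes "homog r n d a u" "homog r n d b v"
  shows "homog r n d (a + b) (bmul n u v)"
  unfolding homog_def
proof (intro conjI allI impI)
  show "bmul n u v \<in> Bset r n" using assms by (intro Bset_bmul homog_Bset)
  fix i j assume i: "i < r" and nz: "coeff (bmul n u v i) j \<noteq> 0"
  hence "coeff (u i * v i) j \<noteq> 0" by (simp add: coeff_bmul split: if_splits)
  hence "(\<Sum>l\<le>j. coeff (u i) l * coeff (v i) (j - l)) \<noteq> 0" by (simp add: coeff_mult)
  then obtain l where l: "l \<le> j" "coeff (u i) l * coeff (v i) (j - l) \<noteq> 0"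
    by (metis (no_types, lifting) atMost_iff sum.not_neutral_contains_not_neutral)
  hence "l * d i = a" "(j - l) * d i = b" using assms i by (auto simp: homog_def)
  moreover have "l * d i + (j - l) * d i = j * d i" using l(1) by (simp add: add_mult_distrib[symmetric])
  ultimately show "j * d i = a + b" by linarith
qed

lemma pi_homog:
  assumes "homog r n d m' h" "\<forall>i<r. 0 < d i"
  shows "hpi d m h = (if m = m' then h else 0)"
proof (rule ext)
  fix i
  show "hpi d m h i = (if m = m' then h else 0) i"
  proof (cases "i < r")
    case True
    have "coeff (hpi d m h i) j = coeff ((if m = m' then h else 0) i) j" for j
      using assms True by (auto simp: coeff_pi homog_def)
    then show ?thesis by (intro poly_eqI)
  next
    case False
    hence "h i = 0" using assms(1) by (simp add: homog_def Bset_iff)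
    then show ?thesis by (simp add: hpi_def)
  qed
qed

lemma pi_hi:
  assumes "hi r d (Suc m) w" "w \<in> Bset r n" "\<forall>i<r. 0 < d i"
  shows "hpi d m w = 0"
proof (rule ext)
  fix i
  show "hpi d m w i = 0 i"
  proof (cases "i < r")
    case True
    have "coeff (hpi d m w i) j = 0" for j
      using assms True by (fastforce simp: coeff_pi hi_def)
    then show ?thesis by (simp add: poly_eqI)
  next
    case False
    hence "w i = 0" using assms(2) by (simp add: Bset_iff)
    then show ?thesis by (simp add: hpi_def)
  qed
qed

lemma pi_bone:
  assumes "0 < m" "\<forall>i<r. 0 < d i"
  shows "hpi d m (bone r n) = 0"
proof (rule ext)
  fix i
  show "hpi d m (bone r n) i = 0 i"
  proof (cases "i < r")
    case True
    have "coeff (hpi d m (bone r n) i) j = 0" for j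
    proof -
      have "j * d i = m \<Longrightarrow> j \<noteq> 0" using assms by auto
      then show ?thesis using assms True by (auto simp: coeff_pi bone_def coeff_mod_monom)
    qed
    then have "hpi d m (bone r n) i = 0" by (intro poly_eqI) simp
    then show ?thesis by simp
  next
    case False
    then show ?thesis by (simp add: hpi_def bone_def)
  qed
qed

context setting begin

lemma graded_induct:
  assumes Q0: "Q 0" and Qadd: "\<And>u v. Q u \<Longrightarrow> Q v \<Longrightarrow> Q (u + v)"
    and Qh: "\<And>h m. h \<in> A \<Longrightarrow> homog r n d m h \<Longrightarrow> Q h"
    and aA: "a \<in> A"
  shows "Q a"
proof -
  obtain hs where hs: "set hs \<subseteq> A" "\<forall>h\<in>set hs. \<exists>m. homog r n d m h" "a = foldr badd hs bzero"
    using graded aA unfolding graded_subalg_def by blast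
  have "Q (foldr badd hs bzero)" using hs(1,2)
  proof (induction hs)
    case Nil then show ?case using Q0 by (simp only: foldr_Nil id_apply bzero_eq)
  next
    case (Cons h hs)
    have e: "foldr badd (h # hs) bzero = h + foldr badd hs bzero"
      by (simp only: foldr_Cons o_apply badd_eq)
    have "Q (foldr badd hs bzero)" using Cons by simp
    moreover have "Q h" using Cons.prems Qh by auto
    ultimately show ?case unfolding e by (rule Qadd[rotated])
  qed
  then show ?thesis using hs(3) by simp
qed

lemma homog0: "h \<in> A \<Longrightarrow> homog r n d 0 h \<Longrightarrow> \<exists>c. h = bscal c (bone r n)"
  using graded unfolding graded_subalg_def by blast

lemma d_pos': "\<forall>i<r. 0 < d i" using d_pos by blast

end


lemma bmul_expand:
  assumes "a' \<in> Bset r n" "b' \<in> Bset r n"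
  shows "bmul n (bscal ca (bone r n) + a') (bscal cb (bone r n) + b')
       = bscal (ca * cb) (bone r n) + bscal ca b' + bscal cb a' + bmul n a' b'"
proof -
  have 1: "bmul n (bscal ca (bone r n)) (bscal cb (bone r n)) = bscal (ca * cb) (bone r n)"
    by (simp add: bmul_bscal_left bmul_bscal_right bmul_bone_left bscal_bscal mult.commute)
  have 2: "bmul n (bscal ca (bone r n)) b' = bscal ca b'"
    using assms by (simp add: bmul_bscal_left bmul_bone_left)
  have 3: "bmul n a' (bscal cb (bone r n)) = bscal cb a'"
    using assms by (simp add: bmul_bscal_right bmul_bone_right)
  show ?thesis
    by (simp only: bmul_add_left bmul_add_right 1 2 3 add_ac)
qed

locale caseb = setting +
  fixes p q :: nat and x y :: "'a elt"
  assumes p_pos: "0 < p" and xA: "x \<in> A" and xh: "homog r n d p x" and x0: "x \<noteq> 0"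
  and pmin: "\<And>m h. 0 < m \<Longrightarrow> m < p \<Longrightarrow> h \<in> A \<Longrightarrow> homog r n d m h \<Longrightarrow> h = 0"
  and q_pos: "0 < q" and yA: "y \<in> A" and yh: "homog r n d q y" and ynot: "y \<notin> mults x"
  and qmin: "\<And>m h. 0 < m \<Longrightarrow> m < q \<Longrightarrow> h \<in> A \<Longrightarrow> homog r n d m h \<Longrightarrow> h \<in> mults x"
begin

lemma mults_0: "0 \<in> mults x" unfolding mults_def using A_zero by force
lemma mults_x: "x \<in> mults x" unfolding mults_def using A_one xA A_Bset bmul_bone_left by force
lemma mults_add: "u \<in> mults x \<Longrightarrow> v \<in> mults x \<Longrightarrow> u + v \<in> mults x"
  unfolding mults_def by (force simp: bmul_add_left[symmetric] intro: A_add)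
lemma mults_scal: "u \<in> mults x \<Longrightarrow> bscal c u \<in> mults x"
  unfolding mults_def by (force simp: bmul_bscal_left[symmetric] intro: A_scal)
lemma mults_A: "u \<in> mults x \<Longrightarrow> u \<in> A"
  unfolding mults_def using xA A_mul by blast
lemma mults_mul: "u \<in> mults x \<Longrightarrow> b \<in> A \<Longrightarrow> bmul n u b \<in> mults x"
proof -
  assume "u \<in> mults x" "b \<in> A"
  then obtain a where a: "a \<in> A" "u = bmul n a x" unfolding mults_def by blast
  have "bmul n u b = bmul n (bmul n a b) x"
    unfolding a(2) by (metis bmul_assoc bmul_comm)
  then show ?thesis unfolding mults_def using a(1) \<open>b \<in> A\<close> A_mul by blast
qed

lemma y0: "y \<noteq> 0" using ynot mults_0 by blast
lemma p_le_q: "p \<le> q"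
proof (rule ccontr)
  assume "\<not> p \<le> q" thus False using pmin[OF q_pos _ yA yh] y0 by simp
qed

lemma r_pos: "0 < r"
proof (rule ccontr)
  assume "\<not> 0 < r"
  hence "y = 0" using yh by (auto simp: homog_def Bset_iff fun_eq_iff)
  thus False using y0 by simp
qed

definition Qd :: "'a elt \<Rightarrow> bool" where
  "Qd a \<longleftrightarrow> (\<exists>c u v. a = bscal c (bone r n) + u + v \<and> u \<in> mults x \<and> hi r d p u \<and> hi r d q v)"

lemma Qd0: "Qd 0"
  unfolding Qd_def by (rule exI[of _ 0], rule exI[of _ 0], rule exI[of _ 0]) (simp add: mults_0)

lemma Qd_add: "Qd a \<Longrightarrow> Qd b \<Longrightarrow> Qd (a + b)"
proof -
  assume "Qd a" "Qd b"
  then obtain c1 u1 v1 c2 u2 v2 where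
    "a = bscal c1 (bone r n) + u1 + v1" "u1 \<in> mults x" "hi r d p u1" "hi r d q v1"
    "b = bscal c2 (bone r n) + u2 + v2" "u2 \<in> mults x" "hi r d p u2" "hi r d q v2"
    unfolding Qd_def by blast
  moreover have "bscal c1 (bone r n) + u1 + v1 + (bscal c2 (bone r n) + u2 + v2)
     = bscal (c1 + c2) (bone r n) + (u1 + u2) + (v1 + v2)"
    by (simp add: bscal_add_left algebra_simps)
  ultimately have "a + b = bscal (c1 + c2) (bone r n) + (u1 + u2) + (v1 + v2)"
     "u1 + u2 \<in> mults x" "hi r d p (u1 + u2)" "hi r d q (v1 + v2)"
    by (auto simp: mults_add hi_add)
  then show "Qd (a + b)" unfolding Qd_def by blast
qed

lemma Qd_h:
  assumes hA: "h \<in> A" and hh: "homog r n d m h"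
  shows "Qd h"
proof (cases "m = 0")
  case True
  then obtain c where "h = bscal c (bone r n)" using homog0 hA hh by blast
  then show ?thesis unfolding Qd_def using mults_0 by (metis add.right_neutral hi_zero)
next
  case False
  show ?thesis
  proof (cases "m < q")
    case True
    have hm: "h \<in> mults x" using qmin[of m h] True False hA hh by simp
    have "hi r d p h"
    proof (cases "m < p")
      case True
      then show ?thesis using pmin[of m h] False hA hh by simp
    next
      case False
      then show ?thesis using hi_homog[OF hh] hi_mono by (simp add: not_less)
    qed
    then show ?thesis using hm unfolding Qd_def by (metis add.right_neutral add.left_neutral bscal_zero(2) hi_zero)
  next
    case True2: False
    have "hi r d q h" using hi_homog[OF hh] hi_mono True2 by (simp add: not_less)
    then show ?thesis using mults_0 unfolding Qd_def by (metis add.left_neutral bscal_zero(2) hi_zero)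
  qed
qed

lemma decomp:
  assumes "a \<in> A"
  shows "\<exists>c u v. a = bscal c (bone r n) + u + v \<and> u \<in> mults x \<and> hi r d p u \<and> hi r d q v"
  using graded_induct[of Qd, OF Qd0 Qd_add Qd_h assms] unfolding Qd_def .

end


definition eps :: "('k::field) elt \<Rightarrow> 'k" where "eps w = coeff (w 0) 0"

lemma eps_add: "eps (u + v) = eps u + eps v" by (simp add: eps_def)
lemma eps_minus: "eps (- u) = - eps u" by (simp add: eps_def)
lemma eps_diff: "eps (u - v) = eps u - eps v" by (simp add: eps_def)
lemma eps_scal: "eps (bscal c u) = c * eps u" by (simp add: eps_def bscal_def)
lemma eps_zero[simp]: "eps 0 = 0" by (simp add: eps_def)

context caseb begin

lemma n0: "1 \<le> n 0" using n_pos r_pos by blast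

lemma eps_bone: "eps (bone r n) = 1"
  using r_pos n0 by (simp add: eps_def bone_def coeff_mod_monom)

lemma eps_bmul: "eps (bmul n u v) = eps u * eps v"
  using n0 by (simp add: eps_def coeff_bmul coeff_mult_0)

lemma eps_hi: "hi r d (Suc m) w \<Longrightarrow> eps w = 0"
  using r_pos unfolding hi_def eps_def by fastforce

definition ij0 :: "nat \<times> nat" where
  "ij0 = (SOME ij. fst ij < r \<and> coeff (x (fst ij)) (snd ij) \<noteq> 0)"

lemma ij0: "fst ij0 < r \<and> coeff (x (fst ij0)) (snd ij0) \<noteq> 0"
proof -
  obtain i where i: "x i \<noteq> 0" using x0 by (auto simp: fun_eq_iff)
  have ir: "i < r" using i xh unfolding homog_def Bset_iff by (meson not_less)
  obtain j where "coeff (x i) j \<noteq> 0" using i poly_eqI[of "x i" 0] by auto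
  hence "\<exists>ij. fst ij < r \<and> coeff (x (fst ij)) (snd ij) \<noteq> 0" using ir by (intro exI[of _ "(i, j)"]) simp
  then show ?thesis unfolding ij0_def by (rule someI_ex)
qed

lemma j0p: "snd ij0 * d (fst ij0) = p"
  using ij0 xh by (auto simp: homog_def)

definition alpha :: "'a elt \<Rightarrow> 'a" where
  "alpha w = coeff (w (fst ij0)) (snd ij0) / coeff (x (fst ij0)) (snd ij0)"

lemma alpha_add: "alpha (u + v) = alpha u + alpha v" by (simp add: alpha_def add_divide_distrib)
lemma alpha_minus: "alpha (- u) = - alpha u" by (simp add: alpha_def)
lemma alpha_diff: "alpha (u - v) = alpha u - alpha v" by (simp add: alpha_def diff_divide_distrib)
lemma alpha_scal: "alpha (bscal c u) = c * alpha u" by (simp add: alpha_def bscal_def)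
lemma alpha_zero[simp]: "alpha 0 = 0" by (simp add: alpha_def)
lemma alpha_x: "alpha x = 1" using ij0 by (simp add: alpha_def)
lemma alpha_bone: "alpha (bone r n) = 0"
proof -
  have "snd ij0 \<noteq> 0" using j0p p_pos by (metis mult_0 less_irrefl)
  then show ?thesis using ij0 by (simp add: alpha_def bone_def coeff_mod_monom)
qed
lemma alpha_hi: "hi r d (Suc p) w \<Longrightarrow> alpha w = 0"
  using ij0 j0p unfolding hi_def alpha_def by fastforce

definition W :: "'a elt set" where "W = hpi d q ` mults x"

lemma W_0: "0 \<in> W" unfolding W_def using mults_0 by (metis image_eqI pi_zero)
lemma W_add: "u \<in> W \<Longrightarrow> v \<in> W \<Longrightarrow> u + v \<in> W"
  unfolding W_def by (auto simp: pi_add[symmetric] intro!: imageI mults_add)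
lemma W_scal: "u \<in> W \<Longrightarrow> bscal c u \<in> W"
  unfolding W_def by (auto simp: pi_scal[symmetric] intro!: imageI mults_scal)
lemma W_minus: "u \<in> W \<Longrightarrow> - u \<in> W"
  using W_scal[of u "-1"] by (simp add: bscal_neg1)
lemma W_diff: "u \<in> W \<Longrightarrow> v \<in> W \<Longrightarrow> u - v \<in> W"
  using W_add[of u "- v"] W_minus[of v] by simp
lemma W_sum: "(\<And>z. z \<in> S \<Longrightarrow> f z \<in> W) \<Longrightarrow> sum f S \<in> W"
  by (induction S rule: infinite_finite_induct) (auto intro: W_add W_0)

lemma split_A:
  assumes "a \<in> A"
  obtains c u v where "a = bscal c (bone r n) + (u + v)" "u \<in> mults x" "hi r d p u" "hi r d q v"
    "eps a = c" "u \<in> Bset r n" "v \<in> Bset r n" "hi r d 1 (u + v)" "hi r d p (u + v)"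
proof -
  obtain c u v where a: "a = bscal c (bone r n) + u + v" "u \<in> mults x" "hi r d p u" "hi r d q v"
    using decomp[OF assms] by blast
  have uB: "u \<in> Bset r n" using a(2) mults_A A_Bset by blast
  have "v = a - bscal c (bone r n) - u" using a(1) by simp
  hence vB: "v \<in> Bset r n" using uB assms A_Bset by (auto intro!: Bset_diff Bset_bscal)
  have hp: "hi r d p (u + v)" using a(3,4) p_le_q by (intro hi_add) (auto intro: hi_mono)
  have h1: "hi r d 1 (u + v)" using hp p_pos hi_mono by fastforce
  have "eps a = c" using a(1) eps_hi[of 0 "u + v"] h1 by (simp add: eps_add eps_scal eps_bone add.assoc)
  then show ?thesis using that a uB vB hp h1 by (simp add: add.assoc)
qed

lemma Dalpha:
  assumes "a \<in> A" "b \<in> A"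
  shows "alpha (bmul n a b) = eps a * alpha b + eps b * alpha a"
proof -
  obtain ca ua va where a: "a = bscal ca (bone r n) + (ua + va)" "eps a = ca"
    "ua \<in> Bset r n" "va \<in> Bset r n" "hi r d p (ua + va)"
    using split_A[OF assms(1)] by metis
  obtain cb ub vb where b: "b = bscal cb (bone r n) + (ub + vb)" "eps b = cb"
    "ub \<in> Bset r n" "vb \<in> Bset r n" "hi r d p (ub + vb)"
    using split_A[OF assms(2)] by metis
  have aB: "ua + va \<in> Bset r n" "ub + vb \<in> Bset r n" using a b by (auto intro: Bset_add)
  have "hi r d (p + p) (bmul n (ua + va) (ub + vb))" using a(5) b(5) by (rule hi_bmul)
  hence z: "alpha (bmul n (ua + va) (ub + vb)) = 0" using p_pos by (intro alpha_hi) (auto intro: hi_mono)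
  show ?thesis
    unfolding a(2) b(2) unfolding a(1) b(1) bmul_expand[OF aB]
    by (simp add: alpha_add alpha_scal alpha_bone z)
qed

lemma Dbeta:
  assumes "a \<in> A" "b \<in> A"
  shows "hpi d q (bmul n a b) - bscal (eps a) (hpi d q b) - bscal (eps b) (hpi d q a) \<in> W"
proof -
  obtain ca ua va where a: "a = bscal ca (bone r n) + (ua + va)" "eps a = ca"
    "ua \<in> Bset r n" "va \<in> Bset r n" "ua \<in> mults x" "hi r d p ua" "hi r d q va"
    using split_A[OF assms(1)] by metis
  obtain cb ub vb where b: "b = bscal cb (bone r n) + (ub + vb)" "eps b = cb"
    "ub \<in> Bset r n" "vb \<in> Bset r n" "ub \<in> mults x" "hi r d p ub" "hi r d q vb"
    using split_A[OF assms(2)] by metis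
  have aB: "ua + va \<in> Bset r n" "ub + vb \<in> Bset r n" using a b by (auto intro: Bset_add)
  have dp: "\<forall>i<r. 0 < d i" using d_pos by blast
  have qb: "hpi d q (bone r n) = 0" using q_pos dp by (rule pi_bone)
  have z1: "hpi d q (bmul n ua vb) = 0"
    using hi_bmul[OF a(6) b(7), of n] p_pos a b dp
    by (intro pi_hi[of r d q _ n]) (auto intro: hi_mono Bset_bmul)
  have z2: "hpi d q (bmul n va ub) = 0"
    using hi_bmul[OF a(7) b(6), of n] p_pos a b dp
    by (intro pi_hi[of r d q _ n]) (auto intro: hi_mono Bset_bmul)
  have z3: "hpi d q (bmul n va vb) = 0"
    using hi_bmul[OF a(7) b(7), of n] q_pos a b dp
    by (intro pi_hi[of r d q _ n]) (auto intro: hi_mono Bset_bmul)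
  have w: "hpi d q (bmul n ua ub) \<in> W"
    unfolding W_def using mults_mul[OF a(5) mults_A[OF b(5)]] by blast
  have "hpi d q (bmul n a b) - bscal (eps a) (hpi d q b) - bscal (eps b) (hpi d q a)
      = hpi d q (bmul n ua ub)"
    unfolding a(2) b(2) unfolding a(1) b(1) bmul_expand[OF aB]
    by (simp add: pi_add pi_scal qb bmul_add_left bmul_add_right z1 z2 z3 bscal_add)
  then show ?thesis using w by simp
qed

end


definition supp :: "('a \<Rightarrow> 'b::zero) \<Rightarrow> 'a set" where "supp f = {z. f z \<noteq> 0}"

definition LG :: "('k::field elt \<Rightarrow> 'k elt \<Rightarrow> 'b::ab_group_add) \<Rightarrow> ('k elt \<Rightarrow> 'k elt) \<Rightarrow> 'b" where
  "LG G f = (\<Sum>z\<in>supp f. G (f z) z)"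

lemma LG_superset:
  assumes "finite S" "supp f \<subseteq> S" "\<And>z. G 0 z = 0"
  shows "LG G f = (\<Sum>z\<in>S. G (f z) z)"
  unfolding LG_def using assms by (intro sum.mono_neutral_left) (auto simp: supp_def)

lemma supp_add: "supp (f + g) \<subseteq> supp f \<union> supp g" for f g :: "'k::field elt \<Rightarrow> 'k elt"
  by (auto simp: supp_def)
lemma supp_minus: "supp (- f) = supp f" for f :: "'k::field elt \<Rightarrow> 'k elt"
  by (auto simp: supp_def)
lemma supp_diff: "supp (f - g) \<subseteq> supp f \<union> supp g" for f g :: "'k::field elt \<Rightarrow> 'k elt"
  by (auto simp: supp_def)
lemma supp_gen: "supp (gen r n c) \<subseteq> {c}" by (auto simp: supp_def gen_def bzero_eq)
lemma supp_fsmul: "supp (fsmul n s f) \<subseteq> supp f" by (auto simp: supp_def fsmul_def bzero_eq)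
lemma supp_zero: "supp (\<lambda>x. bzero) = {}" by (auto simp: supp_def bzero_eq)

locale Gadd =
  fixes G :: "'k::field elt \<Rightarrow> 'k elt \<Rightarrow> 'b::ab_group_add"
  assumes G0: "G 0 z = 0" and Gplus: "G (u + v) z = G u z + G v z"
begin

lemma Gminus: "G (- u) z = - G u z"
  using Gplus[of u "- u" z] G0[of z] by (metis add.commute eq_neg_iff_add_eq_0 add.right_inverse)
lemma Gdiff: "G (u - v) z = G u z - G v z"
  using Gplus[of u "- v" z] Gminus[of v z] by simp

lemma LG_add:
  assumes "finite (supp f)" "finite (supp g)"
  shows "LG G (f + g) = LG G f + LG G g"
proof -
  let ?S = "supp f \<union> supp g"
  have "LG G (f + g) = (\<Sum>z\<in>?S. G ((f + g) z) z)"
    using assms supp_add[of f g] G0 by (intro LG_superset) auto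
  also have "\<dots> = (\<Sum>z\<in>?S. G (f z) z) + (\<Sum>z\<in>?S. G (g z) z)"
    by (simp add: Gplus sum.distrib)
  also have "\<dots> = LG G f + LG G g"
    using assms G0 by (simp add: LG_superset[symmetric])
  finally show ?thesis .
qed

lemma LG_minus: "LG G (- f) = - LG G f"
  unfolding LG_def supp_minus by (simp add: Gminus sum_negf)

lemma LG_diff:
  assumes "finite (supp f)" "finite (supp g)"
  shows "LG G (f - g) = LG G f - LG G g"
  using LG_add[of f "- g"] assms LG_minus[of g] by (simp add: supp_minus)

lemma LG_gen_smul: "LG G (fsmul n s (gen r n c)) = G (bmul n s (bone r n)) c"
proof -
  have "LG G (fsmul n s (gen r n c)) = (\<Sum>z\<in>{c}. G (fsmul n s (gen r n c) z) z)"
    using supp_fsmul[of n s "gen r n c"] supp_gen[of r n c] G0 by (intro LG_superset) auto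
  then show ?thesis by (simp add: fsmul_def gen_def)
qed

lemma LG_gen: "LG G (gen r n c) = G (bone r n) c"
proof -
  have "LG G (gen r n c) = (\<Sum>z\<in>{c}. G (gen r n c z) z)"
    using supp_gen[of r n c] G0 by (intro LG_superset) auto
  then show ?thesis by (simp add: gen_def)
qed

lemma LG_smul: "finite (supp f) \<Longrightarrow> LG G (fsmul n s f) = (\<Sum>z\<in>supp f. G (bmul n s (f z)) z)"
  using supp_fsmul[of n s f] G0 by (subst LG_superset[of "supp f"]) (auto simp: fsmul_def)

end

lemma bscal_sum_left: "bscal (\<Sum>z\<in>S. f z) v = (\<Sum>z\<in>S. bscal (f z) v)"
  by (induction S rule: infinite_finite_induct) (simp_all add: bscal_add_left)

lemma bscal_diff_left: "bscal (a - b) v = bscal a v - bscal b v"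
  by (simp add: bscal_def fun_eq_iff smult_diff_left)

lemma term_id:
  "bscal (es * af + ef * as) bz - bscal az (wz + bscal es bf + bscal ef bs)
   = bscal es (bscal af bz - bscal az bf) + bscal as (bscal ef bz) - bscal (ef * az) bs - bscal az wz"
  by (simp add: fun_eq_iff bscal_def smult_add_left smult_add_right smult_diff_right
      algebra_simps)


lemma finite_supp_gen: "finite (supp (gen r n c))"
  using supp_gen[of r n c] by (rule finite_subset) simp

context caseb begin

definition G2 :: "'a elt \<Rightarrow> 'a elt \<Rightarrow> 'a" where "G2 u z = eps u * alpha z"
definition G1 :: "'a elt \<Rightarrow> 'a elt \<Rightarrow> 'a elt" where "G1 u z = bscal (eps u) (hpi d q z)"
definition G0 :: "'a elt \<Rightarrow> 'a elt \<Rightarrow> 'a elt" where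
  "G0 u z = bscal (alpha u) (hpi d q z) - bscal (alpha z) (hpi d q u)"

lemma g2: "Gadd G2" by unfold_locales (simp_all add: G2_def eps_add algebra_simps)
lemma g1: "Gadd G1" by unfold_locales (simp_all add: G1_def eps_add bscal_add_left)
lemma g0: "Gadd G0"
  by unfold_locales (simp_all add: G0_def alpha_add pi_add bscal_add_left bscal_add algebra_simps)

lemma gen_A: "gen r n c z \<in> A" by (simp add: gen_def bzero_eq A_one A_zero)

definition Inv :: "('a elt \<Rightarrow> 'a elt) \<Rightarrow> bool" where
  "Inv f \<longleftrightarrow> finite (supp f) \<and> (\<forall>z. f z \<in> A) \<and> LG G2 f = 0 \<and> LG G1 f \<in> W \<and> LG G0 f \<in> W"

lemma qb: "hpi d q (bone r n) = 0" using q_pos d_pos by (intro pi_bone) auto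

lemma smul_G0:
  assumes "s \<in> A" "u \<in> A"
  shows "G0 (bmul n s u) z = bscal (eps s) (G0 u z) + bscal (alpha s) (G1 u z)
     - bscal (G2 u z) (hpi d q s)
     - bscal (alpha z) (hpi d q (bmul n s u) - bscal (eps s) (hpi d q u) - bscal (eps u) (hpi d q s))"
proof -
  define wz where "wz = hpi d q (bmul n s u) - bscal (eps s) (hpi d q u) - bscal (eps u) (hpi d q s)"
  have h: "hpi d q (bmul n s u) = wz + bscal (eps s) (hpi d q u) + bscal (eps u) (hpi d q s)"
    unfolding wz_def by simp
  have "G0 (bmul n s u) z = bscal (eps s * alpha u + eps u * alpha s) (hpi d q z)
       - bscal (alpha z) (wz + bscal (eps s) (hpi d q u) + bscal (eps u) (hpi d q s))"
    unfolding G0_def h Dalpha[OF assms] ..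
  also have "\<dots> = bscal (eps s) (bscal (alpha u) (hpi d q z) - bscal (alpha z) (hpi d q u))
      + bscal (alpha s) (bscal (eps u) (hpi d q z)) - bscal (eps u * alpha z) (hpi d q s)
      - bscal (alpha z) wz"
    by (rule term_id)
  finally show ?thesis unfolding wz_def G0_def G1_def G2_def .
qed

lemma krel_Inv: "f \<in> krel r n A \<Longrightarrow> Inv f"
proof (induction rule: krel.induct)
  case zero
  have L: "LG G (\<lambda>x. bzero) = 0" for G :: "'a elt \<Rightarrow> 'a elt \<Rightarrow> 'b::ab_group_add"
    unfolding LG_def supp_zero by (rule sum.empty)
  have "bzero \<in> A" using A_zero by (simp only: bzero_eq)
  then show ?case unfolding Inv_def using L[of G2] L[of G1] L[of G0] W_0 by (simp add: supp_zero)
next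
  case (add f g)
  then have ff: "finite (supp f)" "finite (supp g)" by (auto simp: Inv_def)
  have fin: "finite (supp (f + g))" using ff supp_add[of f g] finite_subset by blast
  have vals: "\<forall>z. (f + g) z \<in> A"
  proof
    fix z
    have "f z \<in> A" "g z \<in> A" using add by (auto simp: Inv_def)
    then show "(f + g) z \<in> A" by (subst plus_fun_apply) (rule A_add)
  qed
  have "LG G2 (f + g) = 0" "LG G1 (f + g) \<in> W" "LG G0 (f + g) \<in> W"
    using add unfolding Gadd.LG_add[OF g2 ff] Gadd.LG_add[OF g1 ff] Gadd.LG_add[OF g0 ff]
    by (auto simp: Inv_def intro: W_add)
  then show ?case unfolding fadd_eq Inv_def using fin vals by blast
next
  case (smul s f)
  then have ff: "finite (supp f)" and fA: "\<And>z. f z \<in> A" and I2: "LG G2 f = 0"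
    and I1: "LG G1 f \<in> W" and I0: "LG G0 f \<in> W" by (auto simp: Inv_def)
  have fin: "finite (supp (fsmul n s f))" using ff supp_fsmul[of n s f] finite_subset by blast
  have vals: "\<forall>z. fsmul n s f z \<in> A" using fA smul(1) by (simp add: fsmul_def A_mul)
  have e2: "LG G2 (fsmul n s f) = eps s * LG G2 f"
    unfolding Gadd.LG_smul[OF g2 ff] by (simp add: LG_def G2_def eps_bmul sum_distrib_left mult.assoc)
  have e1: "LG G1 (fsmul n s f) = bscal (eps s) (LG G1 f)"
    unfolding Gadd.LG_smul[OF g1 ff] by (simp add: LG_def G1_def eps_bmul bscal_sum bscal_bscal)
  define wz where "wz z = hpi d q (bmul n s (f z)) - bscal (eps s) (hpi d q (f z))
        - bscal (eps (f z)) (hpi d q s)" for z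
  have wW: "wz z \<in> W" for z unfolding wz_def using Dbeta[OF smul(1) fA] .
  have e0: "LG G0 (fsmul n s f) = bscal (eps s) (LG G0 f) + bscal (alpha s) (LG G1 f)
       - bscal (LG G2 f) (hpi d q s) - (\<Sum>z\<in>supp f. bscal (alpha z) (wz z))"
    unfolding Gadd.LG_smul[OF g0 ff] smul_G0[OF smul(1) fA] wz_def[symmetric]
    by (simp add: LG_def sum.distrib sum_subtractf bscal_sum bscal_sum_left)
  have "LG G0 (fsmul n s f) = bscal (eps s) (LG G0 f) + bscal (alpha s) (LG G1 f)
       - (\<Sum>z\<in>supp f. bscal (alpha z) (wz z))"
    unfolding e0 I2 by simp
  also have "\<dots> \<in> W" using I0 I1 wW by (intro W_diff W_add W_scal W_sum) auto
  finally have "LG G0 (fsmul n s f) \<in> W" .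
  then show ?case using fin vals e2 e1 I2 I1 by (simp add: Inv_def W_scal)
next
  case (additive a c)
  let ?f = "gen r n (badd a c)" and ?g = "gen r n a" and ?h = "gen r n c"
  have fg: "finite (supp (?g + ?h))"
    by (rule finite_subset[OF supp_add]) (simp add: finite_supp_gen)
  have fin: "finite (supp (fsub ?f (fadd ?g ?h)))" unfolding fsub_eq fadd_eq
    by (rule finite_subset[OF supp_diff]) (simp add: finite_supp_gen fg)
  have L: "LG G (fsub ?f (fadd ?g ?h)) = G (bone r n) (a + c) - (G (bone r n) a + G (bone r n) c)"
    if "Gadd G" for G :: "'a elt \<Rightarrow> 'a elt \<Rightarrow> 'b::ab_group_add"
    unfolding fsub_eq fadd_eq
    by (simp add: Gadd.LG_diff[OF that finite_supp_gen fg] Gadd.LG_add[OF that finite_supp_gen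
          finite_supp_gen] Gadd.LG_gen[OF that] badd_eq)
  have vals: "\<forall>z. fsub ?f (fadd ?g ?h) z \<in> A"
    by (simp add: fsub_eq fadd_eq A_diff A_add gen_A)
  show ?case using fin vals L[OF g2] L[OF g1] L[OF g0]
    by (simp add: Inv_def G2_def G1_def G0_def eps_bone alpha_add pi_add alpha_bone qb W_0)
next
  case (leibniz a c)
  let ?f = "gen r n (bmul n a c)" and ?g = "fsmul n a (gen r n c)" and ?h = "fsmul n c (gen r n a)"
  have fg1: "finite (supp ?g)" "finite (supp ?h)"
    by (rule finite_subset[OF supp_fsmul finite_supp_gen])+
  have fg: "finite (supp (?g + ?h))"
    by (rule finite_subset[OF supp_add]) (simp add: fg1)
  have fin: "finite (supp (fsub ?f (fadd ?g ?h)))" unfolding fsub_eq fadd_eq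
    by (rule finite_subset[OF supp_diff]) (simp add: finite_supp_gen fg)
  have aB: "a \<in> Bset r n" "c \<in> Bset r n" using leibniz A_Bset by auto
  have L: "LG G (fsub ?f (fadd ?g ?h)) = G (bone r n) (bmul n a c) - (G a c + G c a)"
    if "Gadd G" for G :: "'a elt \<Rightarrow> 'a elt \<Rightarrow> 'b::ab_group_add"
    unfolding fsub_eq fadd_eq Gadd.LG_diff[OF that finite_supp_gen fg] Gadd.LG_add[OF that fg1]
          Gadd.LG_gen[OF that] Gadd.LG_gen_smul[OF that] bmul_bone_right[OF aB(1)]
          bmul_bone_right[OF aB(2)] ..
  have vals: "\<forall>z. fsub ?f (fadd ?g ?h) z \<in> A"
  proof
    fix z
    have "?g z \<in> A" "?h z \<in> A" using leibniz unfolding fsmul_def by (auto intro: A_mul gen_A)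
    then show "fsub ?f (fadd ?g ?h) z \<in> A" unfolding fsub_eq fadd_eq
      by (subst minus_apply, subst plus_fun_apply) (intro A_diff gen_A A_add)
  qed
  have c1: "LG G1 (fsub ?f (fadd ?g ?h)) \<in> W"
    unfolding L[OF g1] G1_def eps_bone bscal_one diff_diff_eq[symmetric] using Dbeta[OF leibniz] .
  have c2: "LG G2 (fsub ?f (fadd ?g ?h)) = 0"
    unfolding L[OF g2] G2_def eps_bone Dalpha[OF leibniz] by simp
  have g0b: "G0 (bone r n) z = 0" for z unfolding G0_def alpha_bone qb by simp
  have gg: "(X - Y) + (Y - X) = (0::'g::ab_group_add)" for X Y by simp
  have c3: "LG G0 (fsub ?f (fadd ?g ?h)) = 0"
    unfolding L[OF g0] g0b unfolding G0_def gg by simp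
  show ?case using fin vals c1 c2 c3 W_0 unfolding Inv_def by simp
next
  case (const l)
  have L: "LG G (gen r n (bscal l (bone r n))) = G (bone r n) (bscal l (bone r n))"
    if "Gadd G" for G :: "'a elt \<Rightarrow> 'a elt \<Rightarrow> 'b::ab_group_add"
    by (rule Gadd.LG_gen[OF that])
  show ?case using L[OF g2] L[OF g1] L[OF g0] finite_supp_gen
    by (simp add: Inv_def G2_def G1_def G0_def alpha_scal alpha_bone pi_scal qb W_0 gen_A)
qed

end


declare plus_fun_apply[simp del] zero_fun_apply[simp del] minus_apply[simp del] uminus_apply[simp del]
lemmas fun_apps = plus_fun_apply zero_fun_apply minus_apply uminus_apply

lemma fsmul_assoc: "fsmul n s (fsmul n t g) = fsmul n (bmul n s t) g"
  by (simp add: fsmul_def bmul_assoc)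
lemma fsmul_add_right: "fsmul n s (f + g) = fsmul n s f + fsmul n s g"
  by (simp add: fsmul_def fun_eq_iff bmul_add_right fun_apps)
lemma fsmul_diff_right: "fsmul n s (f - g) = fsmul n s f - fsmul n s g"
  by (simp add: fsmul_def fun_eq_iff bmul_diff_right fun_apps)
lemma fsmul_minus_right: "fsmul n s (- f) = - fsmul n s f"
  by (simp add: fsmul_def fun_eq_iff bmul_minus_right fun_apps)
lemma fsmul_add_left: "fsmul n (s + t) g = fsmul n s g + fsmul n t g"
  by (simp add: fsmul_def fun_eq_iff bmul_add_left fun_apps)
lemma fsmul_diff_left: "fsmul n (s - t) g = fsmul n s g - fsmul n t g"
  by (simp add: fsmul_def fun_eq_iff bmul_diff_left fun_apps)
lemma fsmul_zero_left: "fsmul n 0 g = 0"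
  by (simp add: fsmul_def fun_eq_iff fun_apps)
lemma fsmul_sum_right: "fsmul n s (\<Sum>i\<in>I. F i) = (\<Sum>i\<in>I. fsmul n s (F i))"
proof (induction I rule: infinite_finite_induct)
  case (insert x F)
  then show ?case by (simp only: sum.insert[OF insert(1,2)] fsmul_add_right insert(3))
qed (simp_all add: fsmul_def fun_eq_iff bmul_def fun_apps)

lemma gen_Bset: "gen r n c z \<in> Bset r n" by (simp add: gen_def bzero_eq)

definition uu :: "(nat \<Rightarrow> nat) \<Rightarrow> nat \<Rightarrow> nat \<Rightarrow> ('k::field) elt" where
  "uu n i k = (\<lambda>j. if j = i then monom 1 k mod monom 1 (n i) else 0)"

lemma uu_Bset: "i < r \<Longrightarrow> uu n i k \<in> Bset r n"
  by (auto simp: Bset_iff uu_def)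

lemma uu_mul: "bmul n (uu n i k) (uu n i l) = uu n i (k + l)"
  by (auto simp: fun_eq_iff bmul_def uu_def mod_simps mult_monom)

context setting begin

abbreviation KB where "KB \<equiv> krel r n (Bset r n)"

lemma KB_vals: "f \<in> KB \<Longrightarrow> f z \<in> Bset r n"
proof (induction arbitrary: z rule: krel.induct)
  case zero then show ?case by (simp add: bzero_def Bset_iff)
next
  case (add f g) then show ?case by (simp add: fadd_def badd_eq Bset_add)
next
  case (smul s f) then show ?case by (simp add: fsmul_def Bset_bmul)
next
  case (additive a c) then show ?case
    by (simp add: fsub_def fadd_def bsub_eq badd_eq Bset_diff Bset_add gen_Bset)
next
  case (leibniz a c) then show ?case
    by (simp add: fsub_def fadd_def bsub_eq badd_eq fsmul_def Bset_diff Bset_add gen_Bset Bset_bmul)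
next
  case (const l) then show ?case by (simp add: gen_Bset)
qed

lemma KB_0: "0 \<in> KB"
proof -
  have "(\<lambda>x. bzero) \<in> KB" by (rule krel.zero)
  moreover have "(\<lambda>x. bzero) = (0 :: 'a elt \<Rightarrow> 'a elt)" by (simp add: fun_eq_iff bzero_def fun_apps)
  ultimately show ?thesis by metis
qed
lemma KB_add: "f \<in> KB \<Longrightarrow> g \<in> KB \<Longrightarrow> f + g \<in> KB"
  using krel.add[of f r n "Bset r n" g] by (simp add: fadd_eq)
lemma KB_smul: "s \<in> Bset r n \<Longrightarrow> f \<in> KB \<Longrightarrow> fsmul n s f \<in> KB"
  by (rule krel.smul)
lemma KB_minus: "f \<in> KB \<Longrightarrow> - f \<in> KB"
proof -
  assume f: "f \<in> KB"
  have "fsmul n (- bone r n) f = - f"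
    using KB_vals[OF f] by (simp add: fsmul_def fun_eq_iff bmul_minus_left bmul_bone_left fun_apps)
  moreover have "fsmul n (- bone r n) f \<in> KB" using f by (intro KB_smul Bset_minus Bset_bone)
  ultimately show ?thesis by simp
qed
lemma KB_diff: "f \<in> KB \<Longrightarrow> g \<in> KB \<Longrightarrow> f - g \<in> KB"
  using KB_add[of f "- g"] KB_minus[of g] by simp
lemma KB_sum: "(\<And>i. i \<in> I \<Longrightarrow> F i \<in> KB) \<Longrightarrow> (\<Sum>i\<in>I. F i) \<in> KB"
  by (induction I rule: infinite_finite_induct) (auto intro: KB_add KB_0)

lemma fsmul_bone: "(\<And>z. g z \<in> Bset r n) \<Longrightarrow> fsmul n (bone r n) g = g"
  by (simp add: fsmul_def fun_eq_iff bmul_bone_left)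

lemma R_add: "a \<in> Bset r n \<Longrightarrow> c \<in> Bset r n \<Longrightarrow> gen r n (a + c) - (gen r n a + gen r n c) \<in> KB"
  using krel.additive[where S = "Bset r n" and r = r and n = n] by (simp add: fsub_eq fadd_eq badd_eq)
lemma R_leib: "a \<in> Bset r n \<Longrightarrow> c \<in> Bset r n \<Longrightarrow>
    gen r n (bmul n a c) - (fsmul n a (gen r n c) + fsmul n c (gen r n a)) \<in> KB"
  using krel.leibniz[where S = "Bset r n" and r = r and n = n] by (simp add: fsub_eq fadd_eq)
lemma R_const: "gen r n (bscal l (bone r n)) \<in> KB"
  by (rule krel.const)
lemma gen_zero_KB: "gen r n 0 \<in> KB"
  using R_const[of 0] by simp
lemma gen_one_KB: "gen r n (bone r n) \<in> KB"
  using R_const[of 1] by simp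

lemma E4: "w \<in> Bset r n \<Longrightarrow> gen r n (bscal c w) - fsmul n (bscal c (bone r n)) (gen r n w) \<in> KB"
proof -
  assume w: "w \<in> Bset r n"
  have 1: "gen r n (bmul n (bscal c (bone r n)) w) - (fsmul n (bscal c (bone r n)) (gen r n w)
      + fsmul n w (gen r n (bscal c (bone r n)))) \<in> KB"
    using w by (intro R_leib Bset_bscal Bset_bone)
  have 2: "fsmul n w (gen r n (bscal c (bone r n))) \<in> KB" using w R_const by (rule KB_smul)
  have "gen r n (bscal c w) - fsmul n (bscal c (bone r n)) (gen r n w)
     = (gen r n (bmul n (bscal c (bone r n)) w) - (fsmul n (bscal c (bone r n)) (gen r n w)
      + fsmul n w (gen r n (bscal c (bone r n))))) + fsmul n w (gen r n (bscal c (bone r n)))"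
    using w by (simp add: bscal_as_bmul[symmetric])
  then show ?thesis using KB_add[OF 1 2] by simp
qed

lemma E5: "(\<And>i. i \<in> I \<Longrightarrow> w i \<in> Bset r n) \<Longrightarrow>
   gen r n (\<Sum>i\<in>I. w i) - (\<Sum>i\<in>I. gen r n (w i)) \<in> KB"
proof (induction I rule: infinite_finite_induct)
  case (infinite A) then show ?case using gen_zero_KB by simp
next
  case empty then show ?case using gen_zero_KB by simp
next
  case (insert x F)
  have wx: "w x \<in> Bset r n" and wF: "(\<Sum>i\<in>F. w i) \<in> Bset r n"
    using insert by (auto intro: Bset_sum)
  have "gen r n (\<Sum>i\<in>insert x F. w i) - (\<Sum>i\<in>insert x F. gen r n (w i))
     = (gen r n (w x + (\<Sum>i\<in>F. w i)) - (gen r n (w x) + gen r n (\<Sum>i\<in>F. w i)))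
       + (gen r n (\<Sum>i\<in>F. w i) - (\<Sum>i\<in>F. gen r n (w i)))"
    using insert(1,2) by (simp add: algebra_simps)
  also have "\<dots> \<in> KB" using insert wx wF by (intro KB_add R_add) auto
  finally show ?case .
qed

end


lemma grp1: "X - (a + b) = (X - (a + Y)) + (Y - (b::'g::ab_group_add))" by (simp add: algebra_simps)

context setting begin

lemma fsmul_bone_gen: "fsmul n (bone r n) (gen r n c) = gen r n c"
  by (rule fsmul_bone) (rule gen_Bset)

lemma E1:
  assumes i: "i < r"
  shows "gen r n (uu n i 0) \<in> KB"
proof -
  let ?e = "uu n i 0 :: 'a elt" let ?f = "bone r n - (?e + ?e)"
  have eB: "?e \<in> Bset r n" using i by (rule uu_Bset)
  have ee: "bmul n ?e ?e = ?e" by (simp add: uu_mul)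
  have L: "gen r n (bmul n ?e ?e) - (fsmul n ?e (gen r n ?e) + fsmul n ?e (gen r n ?e)) \<in> KB"
    by (rule R_leib[OF eB eB])
  have "fsmul n ?f (gen r n ?e) = gen r n ?e - (fsmul n ?e (gen r n ?e) + fsmul n ?e (gen r n ?e))"
    unfolding fsmul_diff_left fsmul_add_left fsmul_bone_gen ..
  hence 1: "fsmul n ?f (gen r n ?e) \<in> KB" using L unfolding ee by simp
  have ff: "bmul n ?f ?f = bone r n"
    unfolding bmul_diff_left bmul_diff_right bmul_add_left bmul_add_right bmul_bone_left[OF eB]
      bmul_bone_right[OF eB] bmul_bone_left[OF Bset_bone] ee
    by (simp add: algebra_simps)
  have fB: "?f \<in> Bset r n" using eB by (intro Bset_diff Bset_bone Bset_add)
  have "fsmul n ?f (fsmul n ?f (gen r n ?e)) \<in> KB" using fB 1 by (rule KB_smul)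
  then show ?thesis unfolding fsmul_assoc ff fsmul_bone_gen .
qed

lemma E2:
  assumes i: "i < r"
  shows "fsmul n (bone r n - uu n i 0) (gen r n (uu n i (Suc 0))) \<in> KB"
proof -
  let ?e = "uu n i 0 :: 'a elt" and ?t = "uu n i (Suc 0) :: 'a elt" let ?g = "bone r n - ?e"
  have eB: "?e \<in> Bset r n" and tB: "?t \<in> Bset r n" using i by (auto intro: uu_Bset)
  have gB: "?g \<in> Bset r n" using eB by (intro Bset_diff Bset_bone)
  have g0: "bmul n ?g ?t = 0"
    unfolding bmul_diff_left bmul_bone_left[OF tB] uu_mul[of n i 0 "Suc 0", simplified] by simp
  have L: "gen r n (bmul n ?g ?t) - (fsmul n ?g (gen r n ?t) + fsmul n ?t (gen r n ?g)) \<in> KB"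
    by (rule R_leib[OF gB tB])
  have Ra: "gen r n (?g + ?e) - (gen r n ?g + gen r n ?e) \<in> KB" by (rule R_add[OF gB eB])
  have "gen r n ?g = gen r n (bone r n) - gen r n ?e - (gen r n (?g + ?e) - (gen r n ?g + gen r n ?e))"
    by simp
  hence "gen r n ?g \<in> KB" using Ra gen_one_KB E1[OF i] by (metis KB_diff)
  hence 2: "fsmul n ?t (gen r n ?g) \<in> KB" using tB by (intro KB_smul)
  have "fsmul n ?g (gen r n ?t) = gen r n (bmul n ?g ?t)
     - (gen r n (bmul n ?g ?t) - (fsmul n ?g (gen r n ?t) + fsmul n ?t (gen r n ?g)))
     - fsmul n ?t (gen r n ?g)" by (simp add: algebra_simps)
  then show ?thesis using L 2 gen_zero_KB g0 by (metis KB_diff)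
qed

lemma E3:
  assumes i: "i < r"
  shows "gen r n (uu n i (Suc k)) - fsmul n (bscal (of_nat (Suc k)) (uu n i k)) (gen r n (uu n i (Suc 0))) \<in> KB"
proof (induction k)
  case 0
  have "gen r n (uu n i (Suc 0)) - fsmul n (bscal (of_nat (Suc 0)) (uu n i 0)) (gen r n (uu n i (Suc 0)))
      = fsmul n (bone r n - uu n i 0) (gen r n (uu n i (Suc 0)))"
    unfolding fsmul_diff_left fsmul_bone_gen by simp
  then show ?case using E2[OF i] by metis
next
  case (Suc k)
  let ?t = "uu n i (Suc 0) :: 'a elt" and ?u = "uu n i (Suc k) :: 'a elt" and ?v = "uu n i k :: 'a elt"
  have tB: "?t \<in> Bset r n" and uB: "?u \<in> Bset r n" using i by (auto intro: uu_Bset)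
  have uu2: "bmul n ?u ?t = uu n i (Suc (Suc k))" by (simp add: uu_mul)
  have tv: "bmul n ?t (bscal (of_nat (Suc k)) ?v) = bscal (of_nat (Suc k)) ?u"
    by (simp add: bmul_bscal_right uu_mul)
  have L: "gen r n (bmul n ?u ?t) - (fsmul n ?u (gen r n ?t) + fsmul n ?t (gen r n ?u)) \<in> KB"
    by (rule R_leib[OF uB tB])
  have I: "fsmul n ?t (gen r n ?u - fsmul n (bscal (of_nat (Suc k)) ?v) (gen r n ?t)) \<in> KB"
    using tB Suc.IH by (rule KB_smul)
  have sk: "bscal (of_nat (Suc (Suc k))) ?u = ?u + bscal (of_nat (Suc k)) ?u"
    using bscal_add_left[of 1 "of_nat (Suc k)" ?u] by (simp add: add.commute)
  have "gen r n (uu n i (Suc (Suc k))) - fsmul n (bscal (of_nat (Suc (Suc k))) ?u) (gen r n ?t)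
     = (gen r n (bmul n ?u ?t) - (fsmul n ?u (gen r n ?t) + fsmul n ?t (gen r n ?u)))
       + fsmul n ?t (gen r n ?u - fsmul n (bscal (of_nat (Suc k)) ?v) (gen r n ?t))"
    unfolding uu2 sk fsmul_add_left fsmul_diff_right fsmul_assoc tv by (rule grp1)
  then show ?case using KB_add[OF L I] by simp
qed

lemma grp2: "a - c = (a - b) + (b - (c::'g::ab_group_add))" by simp

lemma E7t:
  assumes i: "i < r"
  shows "gen r n (bscal a (uu n i k)) - fsmul n (bscal (a * of_nat k) (uu n i (k - 1))) (gen r n (uu n i (Suc 0))) \<in> KB"
proof (cases k)
  case 0
  have eB: "uu n i 0 \<in> Bset r n" using i by (rule uu_Bset)
  have "fsmul n (bscal a (bone r n)) (gen r n (uu n i 0)) \<in> KB" using E1[OF i] by (intro KB_smul Bset_bscal Bset_bone)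
  hence "gen r n (bscal a (uu n i 0)) \<in> KB" using E4[OF eB, of a] by (metis KB_add diff_add_cancel)
  then show ?thesis using 0 by (simp add: fsmul_zero_left)
next
  case (Suc k')
  have uB: "uu n i (Suc k') \<in> Bset r n" using i by (rule uu_Bset)
  have 1: "gen r n (bscal a (uu n i (Suc k'))) - fsmul n (bscal a (bone r n)) (gen r n (uu n i (Suc k'))) \<in> KB"
    using E4[OF uB] .
  have 2: "fsmul n (bscal a (bone r n)) (gen r n (uu n i (Suc k')) - fsmul n (bscal (of_nat (Suc k')) (uu n i k')) (gen r n (uu n i (Suc 0)))) \<in> KB"
    using E3[OF i, of k'] by (intro KB_smul Bset_bscal Bset_bone)
  have vB: "uu n i k' \<in> Bset r n" using i by (rule uu_Bset)
  have m: "bmul n (bscal a (bone r n)) (bscal (of_nat (Suc k')) (uu n i k')) = bscal (a * of_nat (Suc k')) (uu n i k')"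
    unfolding bmul_bscal_left bmul_bscal_right bmul_bone_left[OF vB] bscal_bscal by (simp add: mult.commute)
  have eq: "gen r n (bscal a (uu n i (Suc k'))) - fsmul n (bscal (a * of_nat (Suc k')) (uu n i k')) (gen r n (uu n i (Suc 0)))
     = (gen r n (bscal a (uu n i (Suc k'))) - fsmul n (bscal a (bone r n)) (gen r n (uu n i (Suc k'))))
       + fsmul n (bscal a (bone r n)) (gen r n (uu n i (Suc k')) - fsmul n (bscal (of_nat (Suc k')) (uu n i k')) (gen r n (uu n i (Suc 0))))"
    unfolding fsmul_diff_right fsmul_assoc m by (rule grp2)
  show ?thesis unfolding Suc diff_Suc_1 eq by (rule KB_add[OF 1 2])
qed

end


lemma smult_mod: "smult b (P mod M) = (smult b P) mod (M::'k::field poly)"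
  by (simp add: mod_smult_left)

context setting begin

lemma homog_monom:
  assumes h: "homog r n d p x" and i: "i < r"
  shows "x i = monom (coeff (x i) (p div d i)) (p div d i)"
proof (rule poly_eqI)
  fix l
  have di: "0 < d i" using d_pos i by blast
  show "coeff (x i) l = coeff (monom (coeff (x i) (p div d i)) (p div d i)) l"
  proof (cases "coeff (x i) l = 0")
    case True then show ?thesis by (auto simp: coeff_monom)
  next
    case False
    hence "l * d i = p" using h i by (auto simp: homog_def)
    hence "p div d i = l * d i div d i" by simp
    also have "\<dots> = l" using di by simp
    finally show ?thesis by simp
  qed
qed

lemma smult_if0: "smult a (if P then Q else 0) = (if P then smult a Q else 0)" by simp

lemma E6:
  assumes h: "homog r n d p x"
  shows "x = (\<Sum>i<r. bscal (coeff (x i) (p div d i)) (uu n i (p div d i)))"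
proof (rule ext)
  fix j
  have xB: "x \<in> Bset r n" using h by (simp add: homog_def)
  have "(\<Sum>i<r. bscal (coeff (x i) (p div d i)) (uu n i (p div d i))) j
      = (\<Sum>i<r. if j = i then smult (coeff (x i) (p div d i)) (monom 1 (p div d i) mod monom 1 (n i)) else 0)"
    by (simp add: sum_fun_apply bscal_def uu_def smult_if0)
  also have "\<dots> = (if j < r then smult (coeff (x j) (p div d j)) (monom 1 (p div d j) mod monom 1 (n j)) else 0)"
    by (simp add: sum.delta)
  also have "\<dots> = x j"
  proof (cases "j < r")
    case True
    have "smult (coeff (x j) (p div d j)) (monom 1 (p div d j) mod monom 1 (n j))
        = monom (coeff (x j) (p div d j)) (p div d j) mod monom 1 (n j)"
      unfolding mod_smult_left[symmetric] smult_monom by simp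
    also have "\<dots> = x j mod monom 1 (n j)" using homog_monom[OF h True] by simp
    also have "\<dots> = x j" using xB True by (simp add: Bset_iff)
    finally show ?thesis using True by simp
  next
    case False then show ?thesis using xB by (simp add: Bset_iff)
  qed
  finally show "x j = (\<Sum>i<r. bscal (coeff (x i) (p div d i)) (uu n i (p div d i))) j" by simp
qed

lemma E8:
  assumes h: "homog r n d q y" and i: "i < r"
  shows "bmul n y (uu n i k) = bscal (coeff (y i) (q div d i)) (uu n i (q div d i + k))"
proof (rule ext)
  fix j
  show "bmul n y (uu n i k) j = bscal (coeff (y i) (q div d i)) (uu n i (q div d i + k)) j"
  proof (cases "j = i")
    case True
    have "bmul n y (uu n i k) j = (y i * monom 1 k) mod monom 1 (n i)"
      using True by (simp add: bmul_def uu_def mod_simps)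
    also have "\<dots> = (monom (coeff (y i) (q div d i)) (q div d i) * monom 1 k) mod monom 1 (n i)"
      using homog_monom[OF h i] by simp
    also have "\<dots> = bscal (coeff (y i) (q div d i)) (uu n i (q div d i + k)) j"
      using True by (simp add: bscal_def uu_def smult_mod mult_monom smult_monom)
    finally show ?thesis .
  qed (simp add: bmul_def uu_def bscal_def)
qed

lemma E7:
  assumes h: "homog r n d p x"
  shows "gen r n x - (\<Sum>i<r. fsmul n (bscal (coeff (x i) (p div d i) * of_nat (p div d i))
      (uu n i (p div d i - 1))) (gen r n (uu n i (Suc 0)))) \<in> KB"
proof -
  let ?w = "\<lambda>i. bscal (coeff (x i) (p div d i)) (uu n i (p div d i)) :: 'a elt"
  let ?R = "\<lambda>i. fsmul n (bscal (coeff (x i) (p div d i) * of_nat (p div d i))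
      (uu n i (p div d i - 1))) (gen r n (uu n i (Suc 0)))"
  have wB: "\<And>i. i \<in> {..<r} \<Longrightarrow> ?w i \<in> Bset r n" by (auto intro: Bset_bscal uu_Bset)
  have 1: "gen r n (\<Sum>i<r. ?w i) - (\<Sum>i<r. gen r n (?w i)) \<in> KB" using wB by (rule E5)
  have 2: "(\<Sum>i<r. gen r n (?w i) - ?R i) \<in> KB"
    apply (rule KB_sum) apply (rule E7t) by simp
  have "gen r n x - (\<Sum>i<r. ?R i) = (gen r n (\<Sum>i<r. ?w i) - (\<Sum>i<r. gen r n (?w i)))
      + (\<Sum>i<r. gen r n (?w i) - ?R i)"
    by (subst E6[OF h]) (simp add: sum_subtractf)
  then show ?thesis using KB_add[OF 1 2] by simp
qed

lemma E9:
  assumes hx: "homog r n d p x" and hy: "homog r n d q y"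
  shows "fsmul n (bscal (of_nat q) y) (gen r n x) - (\<Sum>i<r. fsmul n
     (bscal (of_nat q * (coeff (x i) (p div d i) * of_nat (p div d i)) * coeff (y i) (q div d i))
        (uu n i (q div d i + (p div d i - 1)))) (gen r n (uu n i (Suc 0)))) \<in> KB"
proof -
  have yB: "bscal (of_nat q) y \<in> Bset r n" using hy by (intro Bset_bscal) (simp add: homog_def)
  have "fsmul n (bscal (of_nat q) y) (gen r n x - (\<Sum>i<r. fsmul n (bscal (coeff (x i) (p div d i) * of_nat (p div d i))
      (uu n i (p div d i - 1))) (gen r n (uu n i (Suc 0))))) \<in> KB"
    using yB E7[OF hx] by (rule KB_smul)
  moreover have "bmul n (bscal (of_nat q) y) (bscal (coeff (x i) (p div d i) * of_nat (p div d i)) (uu n i (p div d i - 1)))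
      = bscal (of_nat q * (coeff (x i) (p div d i) * of_nat (p div d i)) * coeff (y i) (q div d i))
        (uu n i (q div d i + (p div d i - 1)))" if "i < r" for i
    unfolding bmul_bscal_left bmul_bscal_right E8[OF hy that] bscal_bscal by (simp add: ac_simps)
  ultimately show ?thesis
    unfolding fsmul_diff_right fsmul_sum_right fsmul_assoc by simp
qed

end


lemma bscal_id:
  "bscal (pp + qq) Y = bscal (qq * ay) X + bscal ay (bscal pp X)
     - (bscal (qq * ay) X - bscal qq Y - (bscal pp Y - bscal ay (bscal pp X)))"
  by (simp add: fun_eq_iff bscal_def fun_apps smult_add_left algebra_simps)

context caseb begin

definition omega :: "'a elt \<Rightarrow> 'a elt" where
  "omega = fsub (fsmul n (bscal (of_nat q) y) (gen r n x)) (fsmul n (bscal (of_nat p) x) (gen r n y))"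

lemma E11:
  assumes i: "i < r"
  shows "bscal (of_nat q * (coeff (x i) (p div d i) * of_nat (p div d i)) * coeff (y i) (q div d i))
        (uu n i (q div d i + (p div d i - 1)))
       = bscal (of_nat p * (coeff (y i) (q div d i) * of_nat (q div d i)) * coeff (x i) (p div d i))
        (uu n i (p div d i + (q div d i - 1)))"
proof (cases "coeff (x i) (p div d i) = 0 \<or> coeff (y i) (q div d i) = 0")
  case True then show ?thesis by auto
next
  case False
  hence a: "(p div d i) * d i = p" and b: "(q div d i) * d i = q"
    using xh yh i by (auto simp: homog_def)
  have a1: "p div d i \<noteq> 0" using a p_pos by (metis mult_0 less_irrefl)
  have b1: "q div d i \<noteq> 0" using b q_pos by (metis mult_0 less_irrefl)
  have idx: "q div d i + (p div d i - 1) = p div d i + (q div d i - 1)" using a1 b1 by simp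
  have "q * (p div d i) = p * (q div d i)"
    by (metis a b mult.assoc mult.commute)
  hence "(of_nat q * of_nat (p div d i) :: 'a) = of_nat p * of_nat (q div d i)"
    by (metis of_nat_mult)
  hence "(of_nat q * (coeff (x i) (p div d i) * of_nat (p div d i)) * coeff (y i) (q div d i) :: 'a)
       = of_nat p * (coeff (y i) (q div d i) * of_nat (q div d i)) * coeff (x i) (p div d i)"
    by (simp add: ac_simps)
  then show ?thesis unfolding idx by (rule arg_cong)
qed

lemma omega_KB: "omega \<in> KB"
proof -
  let ?S1 = "\<Sum>i<r. fsmul n (bscal (of_nat q * (coeff (x i) (p div d i) * of_nat (p div d i)) * coeff (y i) (q div d i))
        (uu n i (q div d i + (p div d i - 1)))) (gen r n (uu n i (Suc 0)))"
  let ?S2 = "\<Sum>i<r. fsmul n (bscal (of_nat p * (coeff (y i) (q div d i) * of_nat (q div d i)) * coeff (x i) (p div d i))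
        (uu n i (p div d i + (q div d i - 1)))) (gen r n (uu n i (Suc 0)))"
  have 1: "fsmul n (bscal (of_nat q) y) (gen r n x) - ?S1 \<in> KB" by (rule E9[OF xh yh])
  have 2: "fsmul n (bscal (of_nat p) x) (gen r n y) - ?S2 \<in> KB" by (rule E9[OF yh xh])
  have S: "?S1 = ?S2"
    apply (rule sum.cong[OF refl])
    subgoal for i using E11[of i] by simp
    done
  have "omega = (fsmul n (bscal (of_nat q) y) (gen r n x) - ?S1) - (fsmul n (bscal (of_nat p) x) (gen r n y) - ?S2)"
    unfolding omega_def fsub_eq S by simp
  then show ?thesis using KB_diff[OF 1 2] by simp
qed

lemma omega_apply: "omega z = bmul n (bscal (of_nat q) y) (gen r n x z) - bmul n (bscal (of_nat p) x) (gen r n y z)"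
  by (simp add: omega_def fsub_def bsub_eq fsmul_def)

lemma omega_free: "omega \<in> free_mod A"
proof -
  have vals: "\<forall>z. omega z \<in> A"
    unfolding omega_apply using xA yA by (auto intro!: A_diff A_mul A_scal gen_A)
  have out: "omega z = 0" if "z \<noteq> x" "z \<noteq> y" for z
    using that unfolding omega_apply by (simp add: gen_def bzero_eq)
  have "{z. omega z \<noteq> bzero} \<subseteq> {x, y}" using out by (auto simp: bzero_eq)
  hence "finite {z. omega z \<noteq> bzero}" by (rule finite_subset) simp
  moreover have "\<forall>z. z \<notin> A \<longrightarrow> omega z = bzero"
  proof (intro allI impI)
    fix z assume "z \<notin> A"
    hence "z \<noteq> x" "z \<noteq> y" using xA yA by auto
    then show "omega z = bzero" unfolding bzero_eq by (rule out)
  qed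
  ultimately show ?thesis using vals by (simp add: free_mod_def)
qed

lemma W_in_mults:
  assumes "w \<in> mults x"
  shows "hpi d q w \<in> mults x"
proof -
  obtain b where b: "b \<in> A" "w = bmul n b x" using assms unfolding mults_def by blast
  have dp: "\<forall>i<r. 0 < d i" using d_pos by blast
  let ?Q = "\<lambda>b. hpi d q (bmul n b x) \<in> mults x"
  have Q0: "?Q 0" by (simp add: mults_0)
  have Qa: "?Q (u + v)" if "?Q u" "?Q v" for u v using that by (simp add: bmul_add_left pi_add mults_add)
  have Qh: "?Q h" if h: "h \<in> A" "homog r n d m h" for h m
  proof -
    have "homog r n d (m + p) (bmul n h x)" using h(2) xh by (rule homog_bmul)
    hence "hpi d q (bmul n h x) = (if q = m + p then bmul n h x else 0)" using dp by (rule pi_homog)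
    moreover have "bmul n h x \<in> mults x" using h(1) unfolding mults_def by blast
    ultimately show ?thesis using mults_0 by simp
  qed
  have "?Q b" using graded_induct[of ?Q, OF Q0 Qa Qh b(1)] .
  then show ?thesis using b(2) by simp
qed

lemma omega_notA: "omega \<notin> krel r n A"
proof
  assume "omega \<in> krel r n A"
  hence I: "LG G0 omega \<in> W" using krel_Inv by (simp add: Inv_def)
  let ?F1 = "fsmul n (bscal (of_nat q) y) (gen r n x)" and ?F2 = "fsmul n (bscal (of_nat p) x) (gen r n y)"
  have f1: "finite (supp ?F1)" "finite (supp ?F2)"
    by (rule finite_subset[OF supp_fsmul finite_supp_gen])+
  have xB: "x \<in> Bset r n" and yB: "y \<in> Bset r n" using xA yA A_Bset by auto
  have LG: "LG G0 omega = G0 (bscal (of_nat q) y) x - G0 (bscal (of_nat p) x) y"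
    unfolding omega_def fsub_eq Gadd.LG_diff[OF g0 f1] Gadd.LG_gen_smul[OF g0]
      bmul_bone_right[OF Bset_bscal[OF xB]] bmul_bone_right[OF Bset_bscal[OF yB]] ..
  have dp: "\<forall>i<r. 0 < d i" using d_pos by blast
  have by_: "hpi d q y = y" using pi_homog[OF yh dp, of q] by simp
  have bx: "hpi d q x \<in> W" unfolding W_def using mults_x by blast
  have "bscal (of_nat p + of_nat q) y = bscal (of_nat q * alpha y) (hpi d q x) + bscal (alpha y) (bscal (of_nat p) (hpi d q x))
     - LG G0 omega"
    unfolding LG G0_def alpha_scal alpha_x pi_scal by_ bscal_one mult_1_right by (rule bscal_id)
  also have "\<dots> \<in> W" using I bx by (intro W_diff W_add W_scal)
  finally have "bscal (of_nat p + of_nat q) y \<in> W" .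
  hence "bscal (1 / (of_nat p + of_nat q)) (bscal (of_nat p + of_nat q) y) \<in> W" by (rule W_scal)
  moreover have "(of_nat p + of_nat q :: 'a) \<noteq> 0"
  proof -
    have "0 < p + q" using p_pos by simp
    hence "of_nat (p + q) \<noteq> (0::'a)" by (simp del: of_nat_add)
    thus ?thesis by simp
  qed
  ultimately have "y \<in> W" by (simp add: bscal_bscal)
  then obtain w where "w \<in> mults x" "y = hpi d q w" unfolding W_def by blast
  hence "y \<in> mults x" using W_in_mults by simp
  then show False using ynot by simp
qed

lemma not_inj: "omega_map_not_injective r n A"
  unfolding omega_map_not_injective_def using omega_free omega_notA omega_KB by blast

end


context setting begin

lemma caseA:
  assumes xA: "x \<in> A" and xhi: "hi r d 1 x"
    and all: "\<And>m h. 0 < m \<Longrightarrow> h \<in> A \<Longrightarrow> homog r n d m h \<Longrightarrow> h \<in> mults x"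
  shows "principal_ideal_alg n A"
proof (rule principal_if[OF xA xhi])
  let ?Q = "\<lambda>a. \<exists>c w. w \<in> A \<and> a = bscal c (bone r n) + bmul n w x"
  have Q0: "?Q 0" using A_zero by (intro exI[of _ 0]) auto
  have Qa: "?Q (u + v)" if hu: "?Q u" and hv: "?Q v" for u v
  proof -
    obtain c1 w1 c2 w2 where "w1 \<in> A" "u = bscal c1 (bone r n) + bmul n w1 x"
      "w2 \<in> A" "v = bscal c2 (bone r n) + bmul n w2 x" using hu hv by blast
    moreover have "bscal c1 (bone r n) + bmul n w1 x + (bscal c2 (bone r n) + bmul n w2 x)
      = bscal (c1 + c2) (bone r n) + bmul n (w1 + w2) x"
      by (simp add: bscal_add_left bmul_add_left algebra_simps)
    ultimately show ?thesis using A_add by blast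
  qed
  have Qh: "?Q h" if h: "h \<in> A" "homog r n d m h" for h m
  proof (cases "m = 0")
    case True
    then obtain c where "h = bscal c (bone r n)" using homog0 h by blast
    then show ?thesis using A_zero by (intro exI[of _ c] exI[of _ 0]) simp
  next
    case False
    then have "h \<in> mults x" using all h by simp
    then obtain w where "w \<in> A" "h = bmul n w x" unfolding mults_def by blast
    then show ?thesis by (intro exI[of _ 0] exI[of _ w]) simp
  qed
  define QQ where "QQ = ?Q"
  have QQ0: "QQ 0" using Q0 unfolding QQ_def .
  have QQa: "QQ u \<Longrightarrow> QQ v \<Longrightarrow> QQ (u + v)" for u v using Qa unfolding QQ_def .
  have QQh: "h \<in> A \<Longrightarrow> homog r n d m h \<Longrightarrow> QQ h" for h m using Qh unfolding QQ_def .
  have "QQ a" if "a \<in> A" for a using graded_induct[of QQ, OF QQ0 QQa QQh that] .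
  then show "\<forall>a\<in>A. ?Q a" unfolding QQ_def by blast
qed

lemma main:
  assumes np: "\<not> principal_ideal_alg n A"
  shows "omega_map_not_injective r n A"
proof -
  define P where "P = {m. 0 < m \<and> (\<exists>h\<in>A. homog r n d m h \<and> h \<noteq> 0)}"
  show ?thesis
  proof (cases "P = {}")
    case True
    have "principal_ideal_alg n A"
    proof (rule caseA[OF A_zero])
      show "hi r d 1 0" by simp
      fix m h assume "0 < m" "h \<in> A" "homog r n d m h"
      hence "h = 0" using True unfolding P_def by blast
      then show "h \<in> mults 0" unfolding mults_def using A_zero by force
    qed
    with np show ?thesis by blast
  next
    case False
    define p where "p = Least (\<lambda>m. m \<in> P)"
    have pP: "p \<in> P" unfolding p_def using False by (metis LeastI ex_in_conv)
    then obtain x where xA: "x \<in> A" and xh: "homog r n d p x" and x0: "x \<noteq> 0" and p0: "0 < p"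
      unfolding P_def by blast
    have pmin: "h = 0" if "0 < m" "m < p" "h \<in> A" "homog r n d m h" for m h
    proof (rule ccontr)
      assume "h \<noteq> 0"
      hence "m \<in> P" using that unfolding P_def by blast
      hence "p \<le> m" unfolding p_def by (rule Least_le)
      with that show False by simp
    qed
    have xhi: "hi r d 1 x" using hi_homog[OF xh] p0 hi_mono by fastforce
    define Q where "Q = {m. 0 < m \<and> (\<exists>h\<in>A. homog r n d m h \<and> h \<notin> mults x)}"
    show ?thesis
    proof (cases "Q = {}")
      case True
      have "principal_ideal_alg n A"
        by (rule caseA[OF xA xhi]) (use True in \<open>unfold Q_def, blast\<close>)
      with np show ?thesis by blast
    next
      case False
      define q where "q = Least (\<lambda>m. m \<in> Q)"
      have qQ: "q \<in> Q" unfolding q_def using False by (metis LeastI ex_in_conv)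
      then obtain y where yA: "y \<in> A" and yh: "homog r n d q y" and yn: "y \<notin> mults x" and q0: "0 < q"
        unfolding Q_def by blast
      have qmin: "h \<in> mults x" if "0 < m" "m < q" "h \<in> A" "homog r n d m h" for m h
      proof (rule ccontr)
        assume "h \<notin> mults x"
        hence "m \<in> Q" using that unfolding Q_def by blast
        hence "q \<le> m" unfolding q_def by (rule Least_le)
        with that show False by simp
      qed
      interpret cb: caseb r n d A p q x y
        by unfold_locales (use p0 xA xh x0 pmin q0 yA yh yn qmin in auto)
      show ?thesis by (rule cb.not_inj)
    qed
  qed
qed

end

theorem proposition1p5:
  fixes r :: nat and n d :: "nat \<Rightarrow> nat" and A :: "('k::field_char_0) elt set"
  assumes "\<forall>i<r. 1 \<le> n i"
    and "\<forall>i<r. 0 < d i"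
    and "graded_subalg r n d A"
    and "\<not> principal_ideal_alg n A"
  shows "omega_map_not_injective r n A"
proof -
  interpret setting r n d A using assms(1-3) by unfold_locales auto
  show ?thesis using assms(4) by (rule main)
qed


end
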